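(* Let $X\subseteq\mathbb{R}^m$, $f:X\to\mathbb{R}^d$ with $a_{i0}\le f_i(x)\le a_{in}$ on $X$, and $\theta=(\theta_1,\dots,\theta_\kappa):\mathbb{R}^d\to\mathbb{R}^\kappa$ a vector of multilinear functions $\theta_k(s_{1n},\dots,s_{dn})=\sum_{I\in\mathcal{I}_k}c^k_I\prod_{i\in I}s_{in}$. Let $u:X\to\mathbb{R}^{d\times(n+1)}$ be convex with $u_{i0}(x)=a_{i0}$, $u_{in}(x)=f_i(x)$, $u_{ij}(x)\le\min\{f_i(x),a_{ij}\}$ ($j\in[n-1]$), and $W$ a convex set containing $\{(x,f(x))\mid x\in X\}$. Then, identifying $f$ with $s_{\cdot n}=(s_{1n},\dots,s_{dn})$, the set $\{(\vartheta,w,s,\delta)\mid(\vartheta,w,s)\text{ satisfies (HQ)},\ (Z(s),\delta)\text{ satisfies (Inc-1)}\}$ is an ideal formulation of $\bigcup_{H\in\mathcal{H}}\operatorname{conv}\bigl(\{(f,\theta(f))\mid f\in H\}\bigr)$, and adding $u(x)\le s$ and $(x,s_{\cdot n})\in W$ yields an MICP relaxation of the graph of $\theta\circ f$.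
   Context: $d,n,\kappa\ge1$, $[k]=\{1,\dots,k\}$, $E=\{0,\dots,n\}^d$; each $\mathcal{I}_k$ is a collection of subsets of $[d]$, $c^k_I\in\mathbb{R}$. $a\in\mathbb{R}^{d\times(n+1)}$ with $a_{i0}<\dots<a_{in}$; integers $0=\tau(i,0)<\dots<\tau(i,l_i)=n$; $\mathcal{H}=\{\prod_i[a_{i\tau(i,t_i-1)},a_{i\tau(i,t_i)}]\mid t_i\in[l_i]\}$. $\Delta_i=\{z_i\in\mathbb{R}^{n+1}\mid1=z_{i0}\ge\dots\ge z_{in}\ge0\}$. (Inc-1): $z_i\in\Delta_i$, $\delta_{it}\in\{0,1\}$, $z_{i\tau(i,t)}\ge\delta_{it}\ge z_{i\tau(i,t)+1}$ ($i\in[d]$, $t\in[l_i-1]$). $Z(s)_{i0}=1$, $Z(s)_{ij}=(s_{ij}-s_{i,j-1})/(a_{ij}-a_{i,j-1})$. $v_{ij}\in\mathbb{R}^{n+1}$ has $k$-th component $a_{i,\min\{k,j\}}$. System (HQ) in $(\vartheta,w,s)$, $w=(w_p)_{p\in E}$: $\vartheta_k=\sum_{I\in\mathcal{I}_k}c^k_I\sum_{p\in E}(\prod_{i\in I}a_{ip_i})w_p$ for $k\in[\kappa]$; $w\ge0$, $\sum_{p\in E}w_p=1$; $s_i=\sum_{j=0}^nv_{ij}\sum_{p\in E:p_i=j}w_p$ for $i\in[d]$. Ideal formulation: projection onto $(f,\vartheta)$ equals the target set and every extreme point of the continuous relaxation has binary $\delta$. MICP relaxation of the graph: its projection onto $(x,\vartheta)$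 contains $\{(x,\theta(f(x)))\mid x\in X\}$ and its continuous relaxation is convex. *)

theory Defs imports "HOL-Analysis.Analysis" "HOL-Library.Function_Algebras"
begin

text \<open>Vectors of R^k, R^(d x (n+1)), R^E etc. are represented as functions on
  natural-number indices that vanish outside the relevant finite index set.
  To speak about convexity / extreme points we equip functions with the
  pointwise real vector space structure.\<close>

instantiation "fun" :: (type, real_vector) real_vector
begin
definition scaleR_fun :: "real \<Rightarrow> ('a \<Rightarrow> 'b) \<Rightarrow> 'a \<Rightarrow> 'b"
  where "scaleR_fun r f = (\<lambda>x. r *\<^sub>R f x)"
instance
  by standard (auto simp: scaleR_fun_def fun_eq_iff scaleR_add_right scaleR_add_left)
end

definition Eset :: "nat \<Rightarrow> nat \<Rightarrow> (nat \<Rightarrow> nat) set" where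
  "Eset d n = PiE {1..d} (\<lambda>_. {0..n})"

definition theta_map :: "nat \<Rightarrow> (nat \<Rightarrow> nat set set) \<Rightarrow> (nat \<Rightarrow> nat set \<Rightarrow> real)
    \<Rightarrow> (nat \<Rightarrow> real) \<Rightarrow> (nat \<Rightarrow> real)" where
  "theta_map \<kappa> \<I> c f = (\<lambda>k. if k \<in> {1..\<kappa>} then (\<Sum>I\<in>\<I> k. c k I * (\<Prod>i\<in>I. f i)) else 0)"

definition box :: "nat \<Rightarrow> (nat \<Rightarrow> nat \<Rightarrow> real) \<Rightarrow> (nat \<Rightarrow> nat \<Rightarrow> nat) \<Rightarrow> (nat \<Rightarrow> nat)
    \<Rightarrow> (nat \<Rightarrow> real) set" where
  "box d a \<tau> t = {f. (\<forall>i\<in>{1..d}. a i (\<tau> i (t i - 1)) \<le> f i \<and> f i \<le> a i (\<tau> i (t i)))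
                     \<and> (\<forall>i. i \<notin> {1..d} \<longrightarrow> f i = 0)}"

definition Hboxes :: "nat \<Rightarrow> (nat \<Rightarrow> nat \<Rightarrow> real) \<Rightarrow> (nat \<Rightarrow> nat \<Rightarrow> nat) \<Rightarrow> (nat \<Rightarrow> nat)
    \<Rightarrow> (nat \<Rightarrow> real) set set" where
  "Hboxes d a \<tau> l = {box d a \<tau> t | t. t \<in> PiE {1..d} (\<lambda>i. {1..l i})}"

definition target_set :: "nat \<Rightarrow> nat \<Rightarrow> (nat \<Rightarrow> nat set set) \<Rightarrow> (nat \<Rightarrow> nat set \<Rightarrow> real)
    \<Rightarrow> (nat \<Rightarrow> nat \<Rightarrow> real) \<Rightarrow> (nat \<Rightarrow> nat \<Rightarrow> nat) \<Rightarrow> (nat \<Rightarrow> nat)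
    \<Rightarrow> ((nat \<Rightarrow> real) \<times> (nat \<Rightarrow> real)) set" where
  "target_set d \<kappa> \<I> c a \<tau> l =
     (\<Union>H\<in>Hboxes d a \<tau> l. convex hull {(f, theta_map \<kappa> \<I> c f) | f. f \<in> H})"

text \<open>System (HQ) in (vartheta, w, s).  s i k is the k-th component of s_i (k = 0..n);
  the k-th component of v_{ij} is a_{i,min k j}.\<close>
definition HQ :: "nat \<Rightarrow> nat \<Rightarrow> nat \<Rightarrow> (nat \<Rightarrow> nat set set) \<Rightarrow> (nat \<Rightarrow> nat set \<Rightarrow> real)
    \<Rightarrow> (nat \<Rightarrow> nat \<Rightarrow> real) \<Rightarrow> (nat \<Rightarrow> real) \<Rightarrow> ((nat \<Rightarrow> nat) \<Rightarrow> real) \<Rightarrow> (nat \<Rightarrow> nat \<Rightarrow> real)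
    \<Rightarrow> bool" where
  "HQ d n \<kappa> \<I> c a \<theta> w s \<longleftrightarrow>
     (\<forall>k\<in>{1..\<kappa>}. \<theta> k = (\<Sum>I\<in>\<I> k. c k I * (\<Sum>p\<in>Eset d n. (\<Prod>i\<in>I. a i (p i)) * w p)))
   \<and> (\<forall>p\<in>Eset d n. 0 \<le> w p)
   \<and> (\<Sum>p\<in>Eset d n. w p) = 1
   \<and> (\<forall>i\<in>{1..d}. \<forall>k\<in>{0..n}.
        s i k = (\<Sum>j=0..n. a i (min k j) * (\<Sum>p\<in>{p\<in>Eset d n. p i = j}. w p)))"

definition Zmap :: "(nat \<Rightarrow> nat \<Rightarrow> real) \<Rightarrow> (nat \<Rightarrow> nat \<Rightarrow> real) \<Rightarrow> nat \<Rightarrow> nat \<Rightarrow> real" where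
  "Zmap a s = (\<lambda>i j. if j = 0 then 1 else (s i j - s i (j - 1)) / (a i j - a i (j - 1)))"

definition Inc1 :: "bool \<Rightarrow> nat \<Rightarrow> nat \<Rightarrow> (nat \<Rightarrow> nat \<Rightarrow> nat) \<Rightarrow> (nat \<Rightarrow> nat)
    \<Rightarrow> (nat \<Rightarrow> nat \<Rightarrow> real) \<Rightarrow> (nat \<Rightarrow> nat \<Rightarrow> real) \<Rightarrow> bool" where
  "Inc1 bin d n \<tau> l z \<delta> \<longleftrightarrow>
     (\<forall>i\<in>{1..d}.
        z i 0 = 1 \<and> (\<forall>j\<in>{1..n}. z i (j - 1) \<ge> z i j) \<and> z i n \<ge> 0
      \<and> (\<forall>t\<in>{1..l i - 1}.
           (if bin then \<delta> i t \<in> {0, 1} else \<delta> i t \<in> {0..1})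
         \<and> z i (\<tau> i t) \<ge> \<delta> i t \<and> \<delta> i t \<ge> z i (\<tau> i t + 1)))"

definition vars_ok :: "nat \<Rightarrow> nat \<Rightarrow> nat \<Rightarrow> (nat \<Rightarrow> nat)
    \<Rightarrow> (nat \<Rightarrow> real) \<Rightarrow> ((nat \<Rightarrow> nat) \<Rightarrow> real) \<Rightarrow> (nat \<Rightarrow> nat \<Rightarrow> real) \<Rightarrow> (nat \<Rightarrow> nat \<Rightarrow> real)
    \<Rightarrow> bool" where
  "vars_ok d n \<kappa> l \<theta> w s \<delta> \<longleftrightarrow>
     (\<forall>k. k \<notin> {1..\<kappa>} \<longrightarrow> \<theta> k = 0)
   \<and> (\<forall>p. p \<notin> Eset d n \<longrightarrow> w p = 0)
   \<and> (\<forall>i j. \<not> (i \<in> {1..d} \<and> j \<in> {0..n}) \<longrightarrow> s i j = 0)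
   \<and> (\<forall>i t. \<not> (i \<in> {1..d} \<and> t \<in> {1..l i - 1}) \<longrightarrow> \<delta> i t = 0)"

definition formulation :: "bool \<Rightarrow> nat \<Rightarrow> nat \<Rightarrow> nat \<Rightarrow> (nat \<Rightarrow> nat set set)
    \<Rightarrow> (nat \<Rightarrow> nat set \<Rightarrow> real) \<Rightarrow> (nat \<Rightarrow> nat \<Rightarrow> real) \<Rightarrow> (nat \<Rightarrow> nat \<Rightarrow> nat) \<Rightarrow> (nat \<Rightarrow> nat)
    \<Rightarrow> ((nat \<Rightarrow> real) \<times> ((nat \<Rightarrow> nat) \<Rightarrow> real) \<times> (nat \<Rightarrow> nat \<Rightarrow> real) \<times> (nat \<Rightarrow> nat \<Rightarrow> real)) set"
  where
  "formulation bin d n \<kappa> \<I> c a \<tau> l =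
     {(\<theta>, w, s, \<delta>). vars_ok d n \<kappa> l \<theta> w s \<delta> \<and> HQ d n \<kappa> \<I> c a \<theta> w s
                      \<and> Inc1 bin d n \<tau> l (Zmap a s) \<delta>}"

definition ideal_formulation :: "nat \<Rightarrow> nat \<Rightarrow> nat \<Rightarrow> (nat \<Rightarrow> nat set set)
    \<Rightarrow> (nat \<Rightarrow> nat set \<Rightarrow> real) \<Rightarrow> (nat \<Rightarrow> nat \<Rightarrow> real) \<Rightarrow> (nat \<Rightarrow> nat \<Rightarrow> nat) \<Rightarrow> (nat \<Rightarrow> nat)
    \<Rightarrow> bool" where
  "ideal_formulation d n \<kappa> \<I> c a \<tau> l \<longleftrightarrow>
     (\<lambda>(\<theta>, w, s, \<delta>). (\<lambda>i. s i n, \<theta>)) ` formulation True d n \<kappa> \<I> c a \<tau> l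
       = target_set d \<kappa> \<I> c a \<tau> l
   \<and> (\<forall>\<theta> w s \<delta>. (\<theta>, w, s, \<delta>) extreme_point_of formulation False d n \<kappa> \<I> c a \<tau> l \<longrightarrow>
        (\<forall>i\<in>{1..d}. \<forall>t\<in>{1..l i - 1}. \<delta> i t \<in> {0, 1}))"

definition ext_formulation :: "bool \<Rightarrow> nat \<Rightarrow> nat \<Rightarrow> nat \<Rightarrow> (nat \<Rightarrow> nat set set)
    \<Rightarrow> (nat \<Rightarrow> nat set \<Rightarrow> real) \<Rightarrow> (nat \<Rightarrow> nat \<Rightarrow> real) \<Rightarrow> (nat \<Rightarrow> nat \<Rightarrow> nat) \<Rightarrow> (nat \<Rightarrow> nat)
    \<Rightarrow> 'x set \<Rightarrow> ('x \<Rightarrow> nat \<Rightarrow> nat \<Rightarrow> real) \<Rightarrow> ('x \<times> (nat \<Rightarrow> real)) set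
    \<Rightarrow> ('x \<times> (nat \<Rightarrow> real) \<times> ((nat \<Rightarrow> nat) \<Rightarrow> real) \<times> (nat \<Rightarrow> nat \<Rightarrow> real) \<times> (nat \<Rightarrow> nat \<Rightarrow> real)) set"
  where
  "ext_formulation bin d n \<kappa> \<I> c a \<tau> l X u W =
     {(x, \<theta>, w, s, \<delta>). (\<theta>, w, s, \<delta>) \<in> formulation bin d n \<kappa> \<I> c a \<tau> l \<and> x \<in> X
        \<and> (\<forall>i\<in>{1..d}. \<forall>j\<in>{0..n}. u x i j \<le> s i j)
        \<and> (x, (\<lambda>i. s i n)) \<in> W}"

definition MICP_relaxation_graph :: "nat \<Rightarrow> nat \<Rightarrow> nat \<Rightarrow> (nat \<Rightarrow> nat set set)
    \<Rightarrow> (nat \<Rightarrow> nat set \<Rightarrow> real) \<Rightarrow> (nat \<Rightarrow> nat \<Rightarrow> real) \<Rightarrow> (nat \<Rightarrow> nat \<Rightarrow> nat) \<Rightarrow> (nat \<Rightarrow> nat)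
    \<Rightarrow> ('x::real_vector) set \<Rightarrow> ('x \<Rightarrow> nat \<Rightarrow> nat \<Rightarrow> real) \<Rightarrow> ('x \<times> (nat \<Rightarrow> real)) set
    \<Rightarrow> ('x \<Rightarrow> nat \<Rightarrow> real) \<Rightarrow> bool" where
  "MICP_relaxation_graph d n \<kappa> \<I> c a \<tau> l X u W f \<longleftrightarrow>
     {(x, theta_map \<kappa> \<I> c (f x)) | x. x \<in> X}
       \<subseteq> (\<lambda>(x, \<theta>, w, s, \<delta>). (x, \<theta>)) ` ext_formulation True d n \<kappa> \<I> c a \<tau> l X u W
   \<and> convex (ext_formulation False d n \<kappa> \<I> c a \<tau> l X u W)"

end

theory Submission
  imports Defs
begin


lemma sum_fun_apply: "(\<Sum>a\<in>A. f a) x = (\<Sum>a\<in>A. f a x)"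
  by (induction A rule: infinite_finite_induct) auto

lemma scaleR_fun_apply: "(r *\<^sub>R f) x = r *\<^sub>R f x"
  by (simp add: scaleR_fun_def)

lemma sum_nonneg_zero_each:
  fixes w :: "'a \<Rightarrow> real"
  assumes "finite A" "\<forall>p\<in>A. 0 \<le> w p" "\<forall>p\<in>A. 0 \<le> g p" "(\<Sum>p\<in>A. w p * g p) \<le> 0" "p \<in> A" "w p \<noteq> 0"
  shows "g p = 0"
proof -
  have "(\<Sum>p\<in>A. w p * g p) = 0" using assms by (meson antisym sum_nonneg mult_nonneg_nonneg)
  then have "\<forall>p\<in>A. w p * g p = 0" using assms by (subst (asm) sum_nonneg_eq_0_iff) auto
  then show ?thesis using assms by auto
qed

locale cor =
  fixes d n \<kappa> :: nat
    and \<I> :: "nat \<Rightarrow> nat set set" and c :: "nat \<Rightarrow> nat set \<Rightarrow> real"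
    and a :: "nat \<Rightarrow> nat \<Rightarrow> real"
    and \<tau> :: "nat \<Rightarrow> nat \<Rightarrow> nat" and l :: "nat \<Rightarrow> nat"
  assumes d1: "d \<ge> 1" and n1: "n \<ge> 1"
    and Isub: "\<forall>k\<in>{1..\<kappa>}. \<I> k \<subseteq> Pow {1..d}"
    and amono: "\<forall>i\<in>{1..d}. strict_mono_on {0..n} (a i)"
    and tau: "\<forall>i\<in>{1..d}. \<tau> i 0 = 0 \<and> \<tau> i (l i) = n \<and> strict_mono_on {0..l i} (\<tau> i)"
begin

abbreviation "E \<equiv> Eset d n"

lemma finE: "finite E" unfolding Eset_def by (simp add: finite_PiE)

lemma E_le: "p \<in> E \<Longrightarrow> i \<in> {1..d} \<Longrightarrow> p i \<le> n"
  unfolding Eset_def by (auto simp: PiE_def Pi_def)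

lemma a_less: "i \<in> {1..d} \<Longrightarrow> j < k \<Longrightarrow> k \<le> n \<Longrightarrow> a i j < a i k"
  using amono by (auto simp: strict_mono_on_def)

lemma a_le: "i \<in> {1..d} \<Longrightarrow> j \<le> k \<Longrightarrow> k \<le> n \<Longrightarrow> a i j \<le> a i k"
  using a_less by (cases "j = k") (auto simp: less_imp_le)

lemma tau_less: "i \<in> {1..d} \<Longrightarrow> s < t \<Longrightarrow> t \<le> l i \<Longrightarrow> \<tau> i s < \<tau> i t"
  using tau by (auto simp: strict_mono_on_def)

lemma tau_le: "i \<in> {1..d} \<Longrightarrow> s \<le> t \<Longrightarrow> t \<le> l i \<Longrightarrow> \<tau> i s \<le> \<tau> i t"
  using tau_less by (cases "s = t") (auto simp: less_imp_le)

lemma l_pos: "i \<in> {1..d} \<Longrightarrow> l i \<ge> 1"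
  using tau n1 by (metis One_nat_def Suc_leI not_gr_zero not_one_le_zero)

lemma tau_n: "i \<in> {1..d} \<Longrightarrow> t \<le> l i \<Longrightarrow> \<tau> i t \<le> n"
  using tau_le[of i t "l i"] tau by auto

lemma tau_0: "i \<in> {1..d} \<Longrightarrow> \<tau> i 0 = 0" using tau by auto
lemma tau_l: "i \<in> {1..d} \<Longrightarrow> \<tau> i (l i) = n" using tau by auto

lemma tau_inner: "i \<in> {1..d} \<Longrightarrow> t \<in> {1..l i - 1} \<Longrightarrow> 1 \<le> \<tau> i t \<and> \<tau> i t + 1 \<le> n"
  using tau_less[of i 0 t] tau_less[of i t "l i"] tau_0 tau_l by force

definition thp :: "(nat \<Rightarrow> nat) \<Rightarrow> nat \<Rightarrow> real" where
  "thp p = (\<lambda>k. if k \<in> {1..\<kappa>} then (\<Sum>I\<in>\<I> k. c k I * (\<Prod>i\<in>I. a i (p i))) else 0)"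

definition svp :: "(nat \<Rightarrow> nat) \<Rightarrow> nat \<Rightarrow> nat \<Rightarrow> real" where
  "svp p = (\<lambda>i k. if i \<in> {1..d} \<and> k \<in> {0..n} then a i (min k (p i)) else 0)"

definition Th :: "((nat \<Rightarrow> nat) \<Rightarrow> real) \<Rightarrow> nat \<Rightarrow> real" where
  "Th w = (\<lambda>k. \<Sum>p\<in>E. w p * thp p k)"

definition Sv :: "((nat \<Rightarrow> nat) \<Rightarrow> real) \<Rightarrow> nat \<Rightarrow> nat \<Rightarrow> real" where
  "Sv w = (\<lambda>i k. \<Sum>p\<in>E. w p * svp p i k)"

definition Pge :: "((nat \<Rightarrow> nat) \<Rightarrow> real) \<Rightarrow> nat \<Rightarrow> nat \<Rightarrow> real" where
  "Pge w i j = (\<Sum>p\<in>E. w p * (if j \<le> p i then 1 else 0))"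

definition distw :: "((nat \<Rightarrow> nat) \<Rightarrow> real) \<Rightarrow> bool" where
  "distw w \<longleftrightarrow> (\<forall>p. p \<notin> E \<longrightarrow> w p = 0) \<and> (\<forall>p\<in>E. 0 \<le> w p) \<and> (\<Sum>p\<in>E. w p) = 1"

definition Dom :: "(nat \<times> nat) set" where
  "Dom = {(i, t). i \<in> {1..d} \<and> t \<in> {1..l i - 1}}"

definition incok :: "bool \<Rightarrow> ((nat \<Rightarrow> nat) \<Rightarrow> real) \<Rightarrow> (nat \<Rightarrow> nat \<Rightarrow> real) \<Rightarrow> bool" where
  "incok bin w \<delta> \<longleftrightarrow> (\<forall>i t. (i, t) \<notin> Dom \<longrightarrow> \<delta> i t = 0) \<and>
     (\<forall>i\<in>{1..d}. \<forall>t\<in>{1..l i - 1}. (if bin then \<delta> i t \<in> {0, 1} else \<delta> i t \<in> {0..1})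
        \<and> Pge w i (\<tau> i t) \<ge> \<delta> i t \<and> \<delta> i t \<ge> Pge w i (\<tau> i t + 1))"

lemma Pge_bounds: assumes "distw w" shows "0 \<le> Pge w i j" "Pge w i j \<le> 1"
proof -
  show "0 \<le> Pge w i j" using assms unfolding Pge_def distw_def by (auto intro: sum_nonneg)
  have "Pge w i j \<le> (\<Sum>p\<in>E. w p)" unfolding Pge_def using assms unfolding distw_def
    by (intro sum_mono) auto
  then show "Pge w i j \<le> 1" using assms unfolding distw_def by simp
qed

lemma Pge_mono: assumes "distw w" "j \<le> k" shows "Pge w i k \<le> Pge w i j"
  unfolding Pge_def using assms unfolding distw_def by (intro sum_mono) auto

lemma Zmap_Sv: assumes "i \<in> {1..d}" "j \<in> {1..n}"
  shows "Zmap a (Sv w) i j = Pge w i j"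
proof -
  have pos: "a i j - a i (j - 1) > 0" using a_less[of i "j - 1" j] assms by auto
  have "Sv w i j - Sv w i (j - 1) = (\<Sum>p\<in>E. w p * (svp p i j - svp p i (j - 1)))"
    unfolding Sv_def by (simp add: sum_subtractf right_diff_distrib)
  also have "\<dots> = (\<Sum>p\<in>E. w p * ((if j \<le> p i then 1 else 0) * (a i j - a i (j - 1))))"
  proof (intro sum.cong refl)
    fix p assume p: "p \<in> E"
    have "svp p i j - svp p i (j - 1) = (if j \<le> p i then 1 else 0) * (a i j - a i (j - 1))"
    proof (cases "j \<le> p i")
      case True then have "j - 1 \<le> n" using assms by auto
      then show ?thesis using True assms by (simp add: svp_def)
    next
      case False then have "min j (p i) = p i" "min (j - 1) (p i) = p i" using assms by auto
      then show ?thesis using assms False by (simp add: svp_def)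
    qed
    then show "w p * (svp p i j - svp p i (j - 1)) = w p * ((if j \<le> p i then 1 else 0) * (a i j - a i (j - 1)))" by simp
  qed
  also have "\<dots> = Pge w i j * (a i j - a i (j - 1))"
    unfolding Pge_def by (simp add: sum_distrib_right mult.assoc)
  finally show ?thesis using assms pos by (simp add: Zmap_def)
qed

lemma HQ_iff:
  assumes w0: "\<forall>p. p \<notin> E \<longrightarrow> w p = 0"
  shows "HQ d n \<kappa> \<I> c a \<theta> w s \<longleftrightarrow>
     (\<forall>k\<in>{1..\<kappa>}. \<theta> k = Th w k) \<and> (\<forall>p\<in>E. 0 \<le> w p) \<and> (\<Sum>p\<in>E. w p) = 1
     \<and> (\<forall>i\<in>{1..d}. \<forall>k\<in>{0..n}. s i k = Sv w i k)"
proof -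
  have th: "(\<Sum>I\<in>\<I> k. c k I * (\<Sum>p\<in>E. (\<Prod>i\<in>I. a i (p i)) * w p)) = Th w k"
    if "k \<in> {1..\<kappa>}" for k
    using that unfolding Th_def thp_def
    by (simp add: sum_distrib_left sum_distrib_right mult_ac sum.swap[of _ "\<I> k"])
  have sv: "(\<Sum>j=0..n. a i (min k j) * (\<Sum>p\<in>{p\<in>E. p i = j}. w p)) = Sv w i k"
    if "i \<in> {1..d}" "k \<in> {0..n}" for i k
  proof -
    have "(\<Sum>j=0..n. a i (min k j) * (\<Sum>p\<in>{p\<in>E. p i = j}. w p))
        = (\<Sum>j=0..n. (\<Sum>p\<in>{p\<in>E. p i = j}. w p * svp p i k))"
      using that by (auto simp: sum_distrib_left svp_def mult.commute intro!: sum.cong)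
    also have "\<dots> = (\<Sum>p\<in>E. w p * svp p i k)"
      by (rule sum.group) (use finE E_le that in auto)
    finally show ?thesis unfolding Sv_def .
  qed
  show ?thesis unfolding HQ_def using th sv by auto
qed

lemma Inc1_iff:
  assumes "distw w"
  shows "(\<forall>i t. (i, t) \<notin> Dom \<longrightarrow> \<delta> i t = 0) \<and> Inc1 bin d n \<tau> l (Zmap a (Sv w)) \<delta> \<longleftrightarrow> incok bin w \<delta>"
proof -
  have base: "Zmap a (Sv w) i 0 = 1 \<and> (\<forall>j\<in>{1..n}. Zmap a (Sv w) i (j - 1) \<ge> Zmap a (Sv w) i j)
      \<and> Zmap a (Sv w) i n \<ge> 0" if i: "i \<in> {1..d}" for i
  proof -
    have "Zmap a (Sv w) i (j - 1) \<ge> Zmap a (Sv w) i j" if j: "j \<in> {1..n}" for j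
    proof (cases "j = 1")
      case True then show ?thesis using Zmap_Sv[OF i j] Pge_bounds[OF assms] by (simp add: Zmap_def)
    next
      case False then have "j - 1 \<in> {1..n}" using j by auto
      then show ?thesis using Zmap_Sv[OF i j] Zmap_Sv[OF i, of "j - 1"] j Pge_mono[OF assms, of "j - 1" j]
        by auto
    qed
    then show ?thesis using Zmap_Sv[OF i, of n] n1 Pge_bounds[OF assms] by (auto simp: Zmap_def)
  qed
  have inner: "Zmap a (Sv w) i (\<tau> i t) = Pge w i (\<tau> i t) \<and> Zmap a (Sv w) i (\<tau> i t + 1) = Pge w i (\<tau> i t + 1)"
    if "i \<in> {1..d}" "t \<in> {1..l i - 1}" for i t
    using tau_inner[OF that] Zmap_Sv that by auto
  show ?thesis unfolding Inc1_def incok_def using base inner by (auto simp: Dom_def)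
qed

lemma form_iff:
  "(\<theta>, w, s, \<delta>) \<in> formulation bin d n \<kappa> \<I> c a \<tau> l \<longleftrightarrow>
    distw w \<and> \<theta> = Th w \<and> s = Sv w \<and> incok bin w \<delta>"
proof
  assume H: "(\<theta>, w, s, \<delta>) \<in> formulation bin d n \<kappa> \<I> c a \<tau> l"
  then have vo: "vars_ok d n \<kappa> l \<theta> w s \<delta>" and hq: "HQ d n \<kappa> \<I> c a \<theta> w s"
    and inc: "Inc1 bin d n \<tau> l (Zmap a s) \<delta>" unfolding formulation_def by auto
  have w0: "\<forall>p. p \<notin> E \<longrightarrow> w p = 0" using vo unfolding vars_ok_def by auto
  note h = hq[unfolded HQ_iff[OF w0]]
  have dw: "distw w" using w0 h unfolding distw_def by auto
  have "\<theta> = Th w"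
  proof
    fix k show "\<theta> k = Th w k"
      using h vo unfolding vars_ok_def Th_def thp_def by (cases "k \<in> {1..\<kappa>}") auto
  qed
  moreover have "s = Sv w"
  proof (intro ext)
    fix i k show "s i k = Sv w i k"
      using h vo unfolding vars_ok_def Sv_def svp_def by (cases "i \<in> {1..d} \<and> k \<in> {0..n}") auto
  qed
  moreover have "incok bin w \<delta>"
    using Inc1_iff[OF dw, of \<delta> bin] inc vo \<open>s = Sv w\<close> unfolding vars_ok_def Dom_def by auto
  ultimately show "distw w \<and> \<theta> = Th w \<and> s = Sv w \<and> incok bin w \<delta>" using dw by auto
next
  assume H: "distw w \<and> \<theta> = Th w \<and> s = Sv w \<and> incok bin w \<delta>"
  then have dw: "distw w" by auto
  have w0: "\<forall>p. p \<notin> E \<longrightarrow> w p = 0" using dw unfolding distw_def by auto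
  have vo: "vars_ok d n \<kappa> l \<theta> w s \<delta>"
    using H unfolding vars_ok_def distw_def incok_def Th_def thp_def Sv_def svp_def Dom_def by auto
  have hq: "HQ d n \<kappa> \<I> c a \<theta> w s" unfolding HQ_iff[OF w0] using H unfolding distw_def by auto
  have "Inc1 bin d n \<tau> l (Zmap a s) \<delta>" using Inc1_iff[OF dw, of \<delta> bin] H by auto
  then show "(\<theta>, w, s, \<delta>) \<in> formulation bin d n \<kappa> \<I> c a \<tau> l"
    using vo hq unfolding formulation_def by auto
qed


abbreviation "FF \<equiv> formulation False d n \<kappa> \<I> c a \<tau> l"
abbreviation "FT \<equiv> formulation True d n \<kappa> \<I> c a \<tau> l"

lemma lin_Th: "Th (\<lambda>p. u * w1 p + v * w2 p) k = u * Th w1 k + v * Th w2 k"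
  by (simp add: Th_def sum.distrib sum_distrib_left algebra_simps)
lemma lin_Sv: "Sv (\<lambda>p. u * w1 p + v * w2 p) i k = u * Sv w1 i k + v * Sv w2 i k"
  by (simp add: Sv_def sum.distrib sum_distrib_left algebra_simps)
lemma lin_Pge: "Pge (\<lambda>p. u * w1 p + v * w2 p) i k = u * Pge w1 i k + v * Pge w2 i k"
  by (simp add: Pge_def sum.distrib sum_distrib_left algebra_simps)

lemma fun_comb: "(u *\<^sub>R f + v *\<^sub>R g) = (\<lambda>x. u *\<^sub>R f x + v *\<^sub>R g x)"
  by (simp add: scaleR_fun_def plus_fun_def)

lemma incok_TF: "incok True w \<delta> \<Longrightarrow> incok False w \<delta>"
proof -
  have *: "x \<in> {0, 1} \<Longrightarrow> x \<in> {0..1::real}" for x by auto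
  assume "incok True w \<delta>" then show ?thesis unfolding incok_def using * by (simp only: if_True if_False) blast
qed

lemma incok_FT: "incok False w \<delta> \<Longrightarrow> \<forall>(i,t)\<in>Dom. \<delta> i t \<in> {0, 1} \<Longrightarrow> incok True w \<delta>"
  unfolding incok_def Dom_def by auto

lemma FT_sub_FF: "FT \<subseteq> FF"
proof
  fix x assume "x \<in> FT"
  then show "x \<in> FF" by (cases x) (auto simp: form_iff dest: incok_TF)
qed

lemma convex_FF: "convex FF"
proof (rule convexI)
  fix x y and u v :: real
  assume x: "x \<in> FF" and y: "y \<in> FF" and uv: "0 \<le> u" "0 \<le> v" "u + v = 1"
  obtain \<theta>1 w1 s1 \<delta>1 where x1: "x = (\<theta>1, w1, s1, \<delta>1)" by (cases x) auto
  obtain \<theta>2 w2 s2 \<delta>2 where y1: "y = (\<theta>2, w2, s2, \<delta>2)" by (cases y) auto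
  have h1: "distw w1" "\<theta>1 = Th w1" "s1 = Sv w1" "incok False w1 \<delta>1" using x x1 form_iff by auto
  have h2: "distw w2" "\<theta>2 = Th w2" "s2 = Sv w2" "incok False w2 \<delta>2" using y y1 form_iff by auto
  define w where "w = (\<lambda>p. u * w1 p + v * w2 p)"
  have ww: "u *\<^sub>R w1 + v *\<^sub>R w2 = w" unfolding w_def fun_comb by simp
  have dw: "distw w" using h1(1) h2(1) uv unfolding distw_def w_def
    by (auto simp: sum.distrib sum_distrib_left[symmetric])
  have tw: "u *\<^sub>R \<theta>1 + v *\<^sub>R \<theta>2 = Th w" unfolding fun_comb h1 h2 w_def lin_Th by simp
  have sw: "u *\<^sub>R s1 + v *\<^sub>R s2 = Sv w"
  proof (intro ext)
    fix i k show "(u *\<^sub>R s1 + v *\<^sub>R s2) i k = Sv w i k"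
      unfolding h1 h2 w_def lin_Sv by (simp add: scaleR_fun_def)
  qed
  define \<delta> where "\<delta> = u *\<^sub>R \<delta>1 + v *\<^sub>R \<delta>2"
  have \<delta>e: "\<delta> i t = u * \<delta>1 i t + v * \<delta>2 i t" for i t unfolding \<delta>_def fun_comb by (simp add: scaleR_fun_def)
  have A: "\<forall>i t. (i, t) \<notin> Dom \<longrightarrow> \<delta> i t = 0" using h1(4) h2(4) \<delta>e unfolding incok_def by auto
  have B: "\<forall>i\<in>{1..d}. \<forall>t\<in>{1..l i - 1}. (if False then \<delta> i t \<in> {0, 1} else \<delta> i t \<in> {0..1})
        \<and> Pge w i (\<tau> i t) \<ge> \<delta> i t \<and> \<delta> i t \<ge> Pge w i (\<tau> i t + 1)"
  proof (intro ballI)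
    fix i t assume it: "i \<in> {1..d}" "t \<in> {1..l i - 1}"
    have b1: "\<delta>1 i t \<in> {0..1}" "Pge w1 i (\<tau> i t) \<ge> \<delta>1 i t" "\<delta>1 i t \<ge> Pge w1 i (\<tau> i t + 1)"
      using h1(4) it unfolding incok_def by auto
    have b2: "\<delta>2 i t \<in> {0..1}" "Pge w2 i (\<tau> i t) \<ge> \<delta>2 i t" "\<delta>2 i t \<ge> Pge w2 i (\<tau> i t + 1)"
      using h2(4) it unfolding incok_def by auto
    have "u * \<delta>1 i t + v * \<delta>2 i t \<le> u * 1 + v * 1"
      using b1 b2 uv by (intro add_mono mult_left_mono) auto
    moreover have "u * \<delta>1 i t + v * \<delta>2 i t \<ge> 0" using b1 b2 uv by auto
    moreover have "u * \<delta>1 i t + v * \<delta>2 i t \<le> u * Pge w1 i (\<tau> i t) + v * Pge w2 i (\<tau> i t)"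
      using b1 b2 uv by (intro add_mono mult_left_mono) auto
    moreover have "u * \<delta>1 i t + v * \<delta>2 i t \<ge> u * Pge w1 i (\<tau> i t + 1) + v * Pge w2 i (\<tau> i t + 1)"
      using b1 b2 uv by (intro add_mono mult_left_mono) auto
    ultimately show "(if False then \<delta> i t \<in> {0, 1} else \<delta> i t \<in> {0..1}) \<and>
       \<delta> i t \<le> Pge w i (\<tau> i t) \<and> Pge w i (\<tau> i t + 1) \<le> \<delta> i t"
      using uv unfolding \<delta>e w_def lin_Pge by simp
  qed
  have inc: "incok False w \<delta>" unfolding incok_def using A B by blast
  have "u *\<^sub>R x + v *\<^sub>R y = (Th w, w, Sv w, \<delta>)"
    unfolding x1 y1 using tw ww sw \<delta>_def by simp
  then show "u *\<^sub>R x + v *\<^sub>R y \<in> FF" using form_iff dw inc by auto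
qed

definition Rv :: "real \<Rightarrow> nat \<Rightarrow> nat \<Rightarrow> real" where
  "Rv r t j = (if t < j then 1 else if j = t then r else 0)"

definition Dl :: "((nat \<Rightarrow> nat) \<Rightarrow> real) \<Rightarrow> (nat \<Rightarrow> nat \<Rightarrow> real) \<Rightarrow> nat \<Rightarrow> nat \<Rightarrow> real" where
  "Dl w \<rho> = (\<lambda>i t. if (i, t) \<in> Dom then (\<Sum>p\<in>E. w p * Rv (\<rho> i t) (\<tau> i t) (p i)) else 0)"

definition ep :: "(nat \<Rightarrow> nat) \<Rightarrow> (nat \<Rightarrow> nat) \<Rightarrow> real" where
  "ep p = (\<lambda>q. if q = p then 1 else 0)"

lemma Rv_bounds: "0 \<le> r \<Longrightarrow> r \<le> 1 \<Longrightarrow>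
   (if t + 1 \<le> j then 1 else 0) \<le> Rv r t j \<and> Rv r t j \<le> (if t \<le> j then 1 else 0)"
  unfolding Rv_def by auto

lemma pt_FF:
  assumes dw: "distw w" and r: "\<forall>(i,t)\<in>Dom. 0 \<le> \<rho> i t \<and> \<rho> i t \<le> 1"
  shows "(Th w, w, Sv w, Dl w \<rho>) \<in> FF"
proof -
  have A: "\<forall>i t. (i, t) \<notin> Dom \<longrightarrow> Dl w \<rho> i t = 0" unfolding Dl_def by auto
  have B: "\<forall>i\<in>{1..d}. \<forall>t\<in>{1..l i - 1}. (if False then Dl w \<rho> i t \<in> {0, 1} else Dl w \<rho> i t \<in> {0..1})
        \<and> Pge w i (\<tau> i t) \<ge> Dl w \<rho> i t \<and> Dl w \<rho> i t \<ge> Pge w i (\<tau> i t + 1)"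
  proof (intro ballI)
    fix i t assume it: "i \<in> {1..d}" "t \<in> {1..l i - 1}"
    then have D: "(i, t) \<in> Dom" unfolding Dom_def by auto
    have w0: "\<forall>p\<in>E. 0 \<le> w p" using dw unfolding distw_def by auto
    have rit: "0 \<le> \<rho> i t" "\<rho> i t \<le> 1" using r D by auto
    have up: "Dl w \<rho> i t \<le> Pge w i (\<tau> i t)"
      unfolding Dl_def Pge_def using D
    proof (simp only: if_True, intro sum_mono)
      fix p assume "p \<in> E"
      then show "w p * Rv (\<rho> i t) (\<tau> i t) (p i) \<le> w p * (if \<tau> i t \<le> p i then 1 else 0)"
        using w0 Rv_bounds[OF rit, of "\<tau> i t" "p i"] by (intro mult_left_mono) auto
    qed
    have lo: "Dl w \<rho> i t \<ge> Pge w i (\<tau> i t + 1)"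
      unfolding Dl_def Pge_def using D
    proof (simp only: if_True, intro sum_mono)
      fix p assume "p \<in> E"
      then show "w p * (if \<tau> i t + 1 \<le> p i then 1 else 0) \<le> w p * Rv (\<rho> i t) (\<tau> i t) (p i)"
        using w0 Rv_bounds[OF rit, of "\<tau> i t" "p i"] by (intro mult_left_mono) auto
    qed
    show "(if False then Dl w \<rho> i t \<in> {0, 1} else Dl w \<rho> i t \<in> {0..1}) \<and>
       Dl w \<rho> i t \<le> Pge w i (\<tau> i t) \<and> Pge w i (\<tau> i t + 1) \<le> Dl w \<rho> i t"
      using up lo Pge_bounds[OF dw, of i "\<tau> i t"] Pge_bounds[OF dw, of i "\<tau> i t + 1"] by auto
  qed
  have "incok False w (Dl w \<rho>)" unfolding incok_def using A B by blast
  then show ?thesis using form_iff dw by auto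
qed

lemma ep_dist: "p \<in> E \<Longrightarrow> distw (ep p)"
  unfolding distw_def ep_def using finE by auto

lemma ep_sum0: "p \<in> E \<Longrightarrow> (\<Sum>q\<in>E. ep p q * h q) = h p"
proof -
  assume p: "p \<in> E"
  have "(\<Sum>q\<in>E. ep p q * h q) = (\<Sum>q\<in>E. if q = p then h q else 0)"
    by (intro sum.cong) (auto simp: ep_def)
  also have "\<dots> = h p" using p finE by simp
  finally show ?thesis .
qed

lemma Dl_ep0: "p \<in> E \<Longrightarrow> Dl (ep p) \<rho> i t = (if (i, t) \<in> Dom then Rv (\<rho> i t) (\<tau> i t) (p i) else 0)"
  unfolding Dl_def using ep_sum0[of p "\<lambda>q. Rv (\<rho> i t) (\<tau> i t) (q i)"] by simp

lemma ep_FT: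
  assumes p: "p \<in> E" and r: "\<forall>(i,t)\<in>Dom. \<rho> i t \<in> {0, 1}"
  shows "(Th (ep p), ep p, Sv (ep p), Dl (ep p) \<rho>) \<in> FT"
proof -
  have r': "\<forall>(i,t)\<in>Dom. 0 \<le> \<rho> i t \<and> \<rho> i t \<le> 1" using r by auto
  have "Dl (ep p) \<rho> i t = (if (i, t) \<in> Dom then Rv (\<rho> i t) (\<tau> i t) (p i) else 0)" for i t
    using Dl_ep0[OF p] .
  then have b: "\<forall>(i,t)\<in>Dom. Dl (ep p) \<rho> i t \<in> {0, 1}" using r unfolding Rv_def by auto
  show ?thesis using pt_FF[OF ep_dist[OF p] r'] form_iff incok_FT[OF _ b] by auto
qed

lemma sum_Pair: "(\<Sum>x\<in>A. (f x, g x)) = (\<Sum>x\<in>A. f x, \<Sum>x\<in>A. g x)"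
  by (induction A rule: infinite_finite_induct) (auto simp: zero_prod_def)

lemma ep_sum: "p \<in> E \<Longrightarrow> (\<Sum>q\<in>E. ep p q * h q) = h p"
proof -
  assume p: "p \<in> E"
  have "(\<Sum>q\<in>E. ep p q * h q) = (\<Sum>q\<in>E. if q = p then h q else 0)"
    by (intro sum.cong) (auto simp: ep_def)
  also have "\<dots> = h p" using p finE by simp
  finally show ?thesis .
qed

lemma Th_ep: "p \<in> E \<Longrightarrow> Th (ep p) k = thp p k"
  unfolding Th_def by (rule ep_sum)
lemma Sv_ep: "p \<in> E \<Longrightarrow> Sv (ep p) i k = svp p i k"
  unfolding Sv_def by (rule ep_sum)
lemma Dl_ep: "p \<in> E \<Longrightarrow> Dl (ep p) \<rho> i t = (if (i, t) \<in> Dom then Rv (\<rho> i t) (\<tau> i t) (p i) else 0)"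
  unfolding Dl_def using ep_sum[of p "\<lambda>q. Rv (\<rho> i t) (\<tau> i t) (q i)"] by simp

lemma decomp:
  assumes dw: "distw w"
  shows "(Th w, w, Sv w, Dl w \<rho>) = (\<Sum>p\<in>E. w p *\<^sub>R (Th (ep p), ep p, Sv (ep p), Dl (ep p) \<rho>))"
proof -
  have 1: "(\<Sum>p\<in>E. w p *\<^sub>R Th (ep p)) = Th w"
  proof
    fix k
    have "(\<Sum>p\<in>E. w p *\<^sub>R Th (ep p)) k = (\<Sum>p\<in>E. w p * thp p k)"
      unfolding sum_fun_apply scaleR_fun_apply by (intro sum.cong refl) (simp add: Th_ep)
    then show "(\<Sum>p\<in>E. w p *\<^sub>R Th (ep p)) k = Th w k" unfolding Th_def by simp
  qed
  have 2: "(\<Sum>p\<in>E. w p *\<^sub>R ep p) = w"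
  proof
    fix q
    have "(\<Sum>p\<in>E. w p *\<^sub>R ep p) q = (\<Sum>p\<in>E. if p = q then w p else 0)"
      unfolding sum_fun_apply scaleR_fun_apply ep_def by (intro sum.cong) auto
    also have "\<dots> = (if q \<in> E then w q else 0)" using finE by simp
    also have "\<dots> = w q" using dw unfolding distw_def by auto
    finally show "(\<Sum>p\<in>E. w p *\<^sub>R ep p) q = w q" .
  qed
  have 3: "(\<Sum>p\<in>E. w p *\<^sub>R Sv (ep p)) = Sv w"
  proof (intro ext)
    fix i k
    have "(\<Sum>p\<in>E. w p *\<^sub>R Sv (ep p)) i k = (\<Sum>p\<in>E. w p * svp p i k)"
      unfolding sum_fun_apply scaleR_fun_apply by (intro sum.cong refl) (simp add: Sv_ep scaleR_fun_def)
    then show "(\<Sum>p\<in>E. w p *\<^sub>R Sv (ep p)) i k = Sv w i k" unfolding Sv_def by simp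
  qed
  have 4: "(\<Sum>p\<in>E. w p *\<^sub>R Dl (ep p) \<rho>) = Dl w \<rho>"
  proof (intro ext)
    fix i t
    have "(\<Sum>p\<in>E. w p *\<^sub>R Dl (ep p) \<rho>) i t = (\<Sum>p\<in>E. w p * (if (i, t) \<in> Dom then Rv (\<rho> i t) (\<tau> i t) (p i) else 0))"
      unfolding sum_fun_apply scaleR_fun_apply by (intro sum.cong refl) (simp add: Dl_ep scaleR_fun_def)
    then show "(\<Sum>p\<in>E. w p *\<^sub>R Dl (ep p) \<rho>) i t = Dl w \<rho> i t" unfolding Dl_def by simp
  qed
  show ?thesis by (simp only: scaleR_Pair sum_Pair 1 2 3 4)
qed

lemma hull_bin:
  assumes dw: "distw w" and r: "\<forall>(i,t)\<in>Dom. \<rho> i t \<in> {0, 1}"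
  shows "(Th w, w, Sv w, Dl w \<rho>) \<in> convex hull FT"
  unfolding decomp[OF dw]
proof (rule convex_sum)
  show "finite E" by (rule finE)
  show "convex (convex hull FT)" by simp
  show "sum w E = 1" "\<And>i. i \<in> E \<Longrightarrow> 0 \<le> w i" using dw unfolding distw_def by auto
  show "\<And>p. p \<in> E \<Longrightarrow> (Th (ep p), ep p, Sv (ep p), Dl (ep p) \<rho>) \<in> convex hull FT"
    by (rule hull_inc, rule ep_FT[OF _ r])
qed

lemma hull_ind:
  assumes "finite F" and dw: "distw w"
  shows "\<forall>\<rho>. (\<forall>(i,t)\<in>Dom. 0 \<le> \<rho> i t \<and> \<rho> i t \<le> 1) \<and> (\<forall>(i,t)\<in>Dom - F. \<rho> i t \<in> {0, 1})
     \<longrightarrow> (Th w, w, Sv w, Dl w \<rho>) \<in> convex hull FT"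
  using assms(1)
proof (induction F rule: finite_induct)
  case empty then show ?case using hull_bin[OF dw] by auto
next
  case (insert x F)
  obtain i0 t0 where x: "x = (i0, t0)" by (cases x)
  show ?case
  proof (intro allI impI)
    fix \<rho> :: "nat \<Rightarrow> nat \<Rightarrow> real" assume H: "(\<forall>(i,t)\<in>Dom. 0 \<le> \<rho> i t \<and> \<rho> i t \<le> 1) \<and> (\<forall>(i,t)\<in>Dom - insert x F. \<rho> i t \<in> {0, 1})"
    define r where "r = \<rho> i0 t0"
    define \<rho>1 where "\<rho>1 = \<rho>(i0 := (\<rho> i0)(t0 := 1))"
    define \<rho>0 where "\<rho>0 = \<rho>(i0 := (\<rho> i0)(t0 := 0))"
    have c1: "\<forall>(i,t)\<in>Dom. 0 \<le> \<rho>1 i t \<and> \<rho>1 i t \<le> 1" using H unfolding \<rho>1_def by auto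
    have c2: "\<forall>(i,t)\<in>Dom - F. \<rho>1 i t \<in> {0, 1}"
    proof (intro ballI)
      fix y assume y: "y \<in> Dom - F"
      obtain i t where yy: "y = (i, t)" by (cases y)
      show "case y of (i, t) \<Rightarrow> \<rho>1 i t \<in> {0, 1}"
      proof (cases "(i, t) = (i0, t0)")
        case True then show ?thesis unfolding yy \<rho>1_def by auto
      next
        case False
        then have "\<rho>1 i t = \<rho> i t" unfolding \<rho>1_def by auto
        moreover have "(i, t) \<in> Dom - insert x F" using y yy x False by auto
        ultimately show ?thesis using H yy by auto
      qed
    qed
    have h1: "(Th w, w, Sv w, Dl w \<rho>1) \<in> convex hull FT"
      using insert.IH c1 c2 by blast
    have c1: "\<forall>(i,t)\<in>Dom. 0 \<le> \<rho>0 i t \<and> \<rho>0 i t \<le> 1" using H unfolding \<rho>0_def by auto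
    have c2: "\<forall>(i,t)\<in>Dom - F. \<rho>0 i t \<in> {0, 1}"
    proof (intro ballI)
      fix y assume y: "y \<in> Dom - F"
      obtain i t where yy: "y = (i, t)" by (cases y)
      show "case y of (i, t) \<Rightarrow> \<rho>0 i t \<in> {0, 1}"
      proof (cases "(i, t) = (i0, t0)")
        case True then show ?thesis unfolding yy \<rho>0_def by auto
      next
        case False
        then have "\<rho>0 i t = \<rho> i t" unfolding \<rho>0_def by auto
        moreover have "(i, t) \<in> Dom - insert x F" using y yy x False by auto
        ultimately show ?thesis using H yy by auto
      qed
    qed
    have h0: "(Th w, w, Sv w, Dl w \<rho>0) \<in> convex hull FT"
      using insert.IH c1 c2 by blast
    show "(Th w, w, Sv w, Dl w \<rho>) \<in> convex hull FT"
    proof (cases "(i0, t0) \<in> Dom")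
      case False
      then have "Dl w \<rho> = Dl w \<rho>1" unfolding Dl_def \<rho>1_def by (intro ext) auto
      then show ?thesis using h1 by simp
    next
      case True
      then have r01: "0 \<le> r" "r \<le> 1" using H unfolding r_def by auto
      have "Dl w \<rho> = r *\<^sub>R Dl w \<rho>1 + (1 - r) *\<^sub>R Dl w \<rho>0"
      proof (intro ext)
        fix i t
        show "Dl w \<rho> i t = (r *\<^sub>R Dl w \<rho>1 + (1 - r) *\<^sub>R Dl w \<rho>0) i t"
        proof (cases "(i, t) = (i0, t0)")
          case True
          have pw: "w p * Rv r tt j = r * (w p * Rv 1 tt j) + (1 - r) * (w p * Rv 0 tt j)" for p tt j
            unfolding Rv_def by (auto simp: algebra_simps)
          have "Dl w \<rho> i t = (\<Sum>p\<in>E. w p * Rv r (\<tau> i0 t0) (p i0))"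
            using True \<open>(i0, t0) \<in> Dom\<close> unfolding Dl_def r_def by simp
          also have "\<dots> = r * (\<Sum>p\<in>E. w p * Rv 1 (\<tau> i0 t0) (p i0)) + (1 - r) * (\<Sum>p\<in>E. w p * Rv 0 (\<tau> i0 t0) (p i0))"
            by (subst sum.cong[OF refl pw]) (simp only: sum.distrib sum_distrib_left[symmetric])
          also have "\<dots> = (r *\<^sub>R Dl w \<rho>1 + (1 - r) *\<^sub>R Dl w \<rho>0) i t"
            using True \<open>(i0, t0) \<in> Dom\<close> unfolding Dl_def \<rho>1_def \<rho>0_def by (simp add: scaleR_fun_def)
          finally show ?thesis .
        next
          case False
          then have "\<rho>1 i t = \<rho> i t" "\<rho>0 i t = \<rho> i t" unfolding \<rho>1_def \<rho>0_def by auto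
          then show ?thesis unfolding Dl_def by (simp add: scaleR_fun_def algebra_simps)
        qed
      qed
      then have "(Th w, w, Sv w, Dl w \<rho>) = r *\<^sub>R (Th w, w, Sv w, Dl w \<rho>1) + (1 - r) *\<^sub>R (Th w, w, Sv w, Dl w \<rho>0)"
        by (simp add: scaleR_add_left[symmetric])
      then show ?thesis using convexD[OF convex_convex_hull h1 h0, of r "1 - r"] r01 by simp
    qed
  qed
qed

lemma finDom: "finite Dom"
proof -
  have "Dom \<subseteq> {1..d} \<times> {1..Max (l ` {1..d})}"
  proof
    fix x assume "x \<in> Dom"
    then obtain i t where x: "x = (i, t)" "i \<in> {1..d}" "t \<in> {1..l i - 1}" unfolding Dom_def by auto
    have "l i \<le> Max (l ` {1..d})" using x by (intro Max_ge) auto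
    moreover have "t \<le> l i" using x by auto
    ultimately have "t \<le> Max (l ` {1..d})" by linarith
    then show "x \<in> {1..d} \<times> {1..Max (l ` {1..d})}" using x by auto
  qed
  then show ?thesis by (rule finite_subset) auto
qed

lemma FF_hull: "x \<in> FF \<Longrightarrow> x \<in> convex hull FT"
proof -
  assume x: "x \<in> FF"
  obtain \<theta> w s \<delta> where x1: "x = (\<theta>, w, s, \<delta>)" by (cases x) auto
  have h: "distw w" "\<theta> = Th w" "s = Sv w" "incok False w \<delta>" using x x1 form_iff by auto
  define \<rho> where "\<rho> i t = (if Pge w i (\<tau> i t) - Pge w i (\<tau> i t + 1) = 0 then 0
      else (\<delta> i t - Pge w i (\<tau> i t + 1)) / (Pge w i (\<tau> i t) - Pge w i (\<tau> i t + 1)))" for i t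
  have bd: "Pge w i (\<tau> i t + 1) \<le> \<delta> i t \<and> \<delta> i t \<le> Pge w i (\<tau> i t)" if "(i, t) \<in> Dom" for i t
    using h(4) that unfolding incok_def Dom_def by auto
  have r: "\<forall>(i,t)\<in>Dom. 0 \<le> \<rho> i t \<and> \<rho> i t \<le> 1"
  proof (intro ballI)
    fix x assume xD: "x \<in> Dom"
    obtain i t where x: "x = (i, t)" by (cases x)
    have b: "Pge w i (\<tau> i t + 1) \<le> \<delta> i t \<and> \<delta> i t \<le> Pge w i (\<tau> i t)" using bd xD x by auto
    show "case x of (i, t) \<Rightarrow> 0 \<le> \<rho> i t \<and> \<rho> i t \<le> 1"
    proof (cases "Pge w i (\<tau> i t) - Pge w i (\<tau> i t + 1) = 0")
      case True then show ?thesis unfolding x \<rho>_def by simp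
    next
      case False
      then have "Pge w i (\<tau> i t) - Pge w i (\<tau> i t + 1) > 0" using b by auto
      then show ?thesis unfolding x \<rho>_def using b False by (auto simp: divide_simps)
    qed
  qed
  have sumRv: "(\<Sum>p\<in>E. w p * Rv r tt (p i)) = Pge w i (tt + 1) + r * (Pge w i tt - Pge w i (tt + 1))" for r tt i
  proof -
    define A where "A p = w p * (if tt + 1 \<le> p i then 1 else 0)" for p
    define B where "B p = w p * (if tt \<le> p i then 1 else 0)" for p
    have "w p * Rv r tt (p i) = A p + r * (B p - A p)" for p
      unfolding Rv_def A_def B_def by auto
    then have "(\<Sum>p\<in>E. w p * Rv r tt (p i)) = (\<Sum>p\<in>E. A p + r * (B p - A p))" by simp
    also have "\<dots> = sum A E + r * (sum B E - sum A E)"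
      by (simp add: sum.distrib sum_distrib_left[symmetric] sum_subtractf)
    finally show ?thesis unfolding Pge_def A_def B_def .
  qed
  have "\<delta> = Dl w \<rho>"
  proof (intro ext)
    fix i t show "\<delta> i t = Dl w \<rho> i t"
    proof (cases "(i, t) \<in> Dom")
      case False then show ?thesis using h(4) unfolding Dl_def incok_def by auto
    next
      case True
      then show ?thesis using bd[OF True] unfolding Dl_def sumRv \<rho>_def by auto
    qed
  qed
  then show "x \<in> convex hull FT" using hull_ind[OF finDom h(1)] r x1 h by auto
qed

lemma extreme_binary:
  assumes "(\<theta>, w, s, \<delta>) extreme_point_of FF"
  shows "\<forall>i\<in>{1..d}. \<forall>t\<in>{1..l i - 1}. \<delta> i t \<in> {0, 1}"
proof -
  have xin: "(\<theta>, w, s, \<delta>) \<in> FF" using assms extreme_point_of_def by blast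
  have sub: "convex hull FT \<subseteq> FF" using FT_sub_FF convex_FF by (simp add: hull_minimal)
  have "(\<theta>, w, s, \<delta>) extreme_point_of (convex hull FT)"
    using assms FF_hull[OF xin] sub unfolding extreme_point_of_def by blast
  then have "(\<theta>, w, s, \<delta>) \<in> FT" by (rule extreme_point_of_convex_hull)
  then show ?thesis using form_iff unfolding incok_def by auto
qed

end


context cor begin

definition qf :: "(nat \<Rightarrow> nat) \<Rightarrow> (nat \<Rightarrow> nat) \<Rightarrow> (nat \<Rightarrow> real) \<Rightarrow> nat \<Rightarrow> nat \<Rightarrow> real" where
  "qf lo hi lam i j = (if j = lo i then 1 - lam i else if j = hi i then lam i else 0)"

definition pw :: "(nat \<Rightarrow> nat) \<Rightarrow> (nat \<Rightarrow> nat) \<Rightarrow> (nat \<Rightarrow> real) \<Rightarrow> (nat \<Rightarrow> nat) \<Rightarrow> real" where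
  "pw lo hi lam = (\<lambda>p. if p \<in> E then (\<Prod>i\<in>{1..d}. qf lo hi lam i (p i)) else 0)"

definition Fv :: "(nat \<Rightarrow> nat) \<Rightarrow> (nat \<Rightarrow> nat) \<Rightarrow> (nat \<Rightarrow> real) \<Rightarrow> nat \<Rightarrow> real" where
  "Fv lo hi lam = (\<lambda>i. if i \<in> {1..d} then (1 - lam i) * a i (lo i) + lam i * a i (hi i) else 0)"

context
  fixes lo hi :: "nat \<Rightarrow> nat" and lam :: "nat \<Rightarrow> real"
  assumes lh: "\<forall>i\<in>{1..d}. lo i < hi i \<and> hi i \<le> n \<and> 0 \<le> lam i \<and> lam i \<le> 1"
begin

lemma pw_sum: "(\<Sum>p\<in>E. pw lo hi lam p * (\<Prod>i\<in>{1..d}. g i (p i)))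
    = (\<Prod>i\<in>{1..d}. (1 - lam i) * g i (lo i) + lam i * g i (hi i))"
proof -
  have "(\<Sum>p\<in>E. pw lo hi lam p * (\<Prod>i\<in>{1..d}. g i (p i)))
      = (\<Sum>p\<in>E. (\<Prod>i\<in>{1..d}. qf lo hi lam i (p i) * g i (p i)))"
    unfolding pw_def by (intro sum.cong refl) (simp add: prod.distrib)
  also have "\<dots> = (\<Prod>i\<in>{1..d}. \<Sum>j\<in>{0..n}. qf lo hi lam i j * g i j)"
    unfolding Eset_def by (rule prod_sum_PiE[symmetric]) auto
  also have "\<dots> = (\<Prod>i\<in>{1..d}. (1 - lam i) * g i (lo i) + lam i * g i (hi i))"
  proof (intro prod.cong refl)
    fix i assume i: "i \<in> {1..d}"
    have "qf lo hi lam i j * g i j = (if j = lo i then (1 - lam i) * g i (lo i) else 0)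
        + (if j = hi i then lam i * g i (hi i) else 0)" for j
    proof -
      have "lo i < hi i" using lh i by blast
      then have "lo i \<noteq> hi i" by simp
      then show ?thesis unfolding qf_def by auto
    qed
    then have "(\<Sum>j\<in>{0..n}. qf lo hi lam i j * g i j)
        = (\<Sum>j\<in>{0..n}. (if j = lo i then (1 - lam i) * g i (lo i) else 0))
        + (\<Sum>j\<in>{0..n}. (if j = hi i then lam i * g i (hi i) else 0))"
      by (simp add: sum.distrib)
    also have "\<dots> = (1 - lam i) * g i (lo i) + lam i * g i (hi i)"
    proof -
      have "lo i < hi i \<and> hi i \<le> n" using lh i by blast
      then show ?thesis by simp
    qed
    finally show "(\<Sum>j\<in>{0..n}. qf lo hi lam i j * g i j) = (1 - lam i) * g i (lo i) + lam i * g i (hi i)" .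
  qed
  finally show ?thesis .
qed

lemma pw_dist: "distw (pw lo hi lam)"
proof -
  have "(\<Sum>p\<in>E. pw lo hi lam p) = 1"
    using pw_sum[of "\<lambda>i j. 1"] by simp
  moreover have "\<forall>p\<in>E. 0 \<le> pw lo hi lam p"
    unfolding pw_def qf_def using lh by (auto intro!: prod_nonneg)
  ultimately show ?thesis unfolding distw_def pw_def by auto
qed

lemma pw_supp: "pw lo hi lam p \<noteq> 0 \<Longrightarrow> p \<in> E \<and> (\<forall>i\<in>{1..d}. p i = lo i \<or> p i = hi i)"
  unfolding pw_def qf_def by (auto split: if_splits)

lemma prod_restrict: "I \<subseteq> {1..d} \<Longrightarrow> (\<Prod>i\<in>{1..d}. if i \<in> I then h i else 1) = (\<Prod>i\<in>I. h i)"
  by (simp add: prod.If_cases Int_absorb2 Int_commute)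


lemma pw_Th: "Th (pw lo hi lam) = theta_map \<kappa> \<I> c (Fv lo hi lam)"
proof
  fix k show "Th (pw lo hi lam) k = theta_map \<kappa> \<I> c (Fv lo hi lam) k"
  proof (cases "k \<in> {1..\<kappa>}")
    case False
    then have "thp p k = 0" for p unfolding thp_def by auto
    moreover have "theta_map \<kappa> \<I> c (Fv lo hi lam) k = 0" by (simp only: theta_map_def if_not_P[OF False])
    ultimately show ?thesis unfolding Th_def by simp
  next
    case True
    then have Ik: "\<I> k \<subseteq> Pow {1..d}" using Isub by auto
    have "Th (pw lo hi lam) k = (\<Sum>I\<in>\<I> k. c k I * (\<Sum>p\<in>E. pw lo hi lam p * (\<Prod>i\<in>I. a i (p i))))"
      unfolding Th_def thp_def using True
      by (simp add: sum_distrib_left sum.swap[of _ E] mult_ac)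
    also have "\<dots> = (\<Sum>I\<in>\<I> k. c k I * (\<Prod>i\<in>I. Fv lo hi lam i))"
    proof (intro sum.cong refl arg_cong2[where f = "(*)"])
      fix I assume I: "I \<in> \<I> k"
      then have Isd: "I \<subseteq> {1..d}" using Ik by auto
      have "(\<Sum>p\<in>E. pw lo hi lam p * (\<Prod>i\<in>I. a i (p i)))
          = (\<Sum>p\<in>E. pw lo hi lam p * (\<Prod>i\<in>{1..d}. (\<lambda>i j. if i \<in> I then a i j else 1) i (p i)))"
        by (intro sum.cong refl arg_cong2[where f = "(*)"]) (rule prod_restrict[OF Isd, symmetric])
      also have "\<dots> = (\<Prod>i\<in>{1..d}. (1 - lam i) * (if i \<in> I then a i (lo i) else 1) + lam i * (if i \<in> I then a i (hi i) else 1))"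
        by (rule pw_sum)
      also have "\<dots> = (\<Prod>i\<in>{1..d}. if i \<in> I then Fv lo hi lam i else 1)"
        by (intro prod.cong refl) (auto simp: Fv_def algebra_simps)
      also have "\<dots> = (\<Prod>i\<in>I. Fv lo hi lam i)" by (rule prod_restrict[OF Isd])
      finally show "(\<Sum>p\<in>E. pw lo hi lam p * (\<Prod>i\<in>I. a i (p i))) = (\<Prod>i\<in>I. Fv lo hi lam i)" .
    qed
    finally show ?thesis unfolding theta_map_def using True by simp
  qed
qed

lemma pw_Sv: assumes i: "i \<in> {1..d}" and k: "k \<le> n"
  shows "Sv (pw lo hi lam) i k = (1 - lam i) * a i (min k (lo i)) + lam i * a i (min k (hi i))"
proof -
  have "Sv (pw lo hi lam) i k = (\<Sum>p\<in>E. pw lo hi lam p * (\<Prod>i'\<in>{1..d}. (\<lambda>i' j. if i' \<in> {i} then a i (min k j) else 1) i' (p i')))"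
    unfolding Sv_def svp_def using i k prod_restrict[of "{i}"] by simp
  also have "\<dots> = (\<Prod>i'\<in>{1..d}. (1 - lam i') * (if i' \<in> {i} then a i (min k (lo i')) else 1) + lam i' * (if i' \<in> {i} then a i (min k (hi i')) else 1))"
    by (rule pw_sum)
  also have "\<dots> = (\<Prod>i'\<in>{1..d}. if i' \<in> {i} then (1 - lam i) * a i (min k (lo i)) + lam i * a i (min k (hi i)) else 1)"
    by (intro prod.cong refl) (auto simp: algebra_simps)
  also have "\<dots> = (1 - lam i) * a i (min k (lo i)) + lam i * a i (min k (hi i))"
    using prod_restrict[of "{i}"] i by simp
  finally show ?thesis .
qed

end


definition ap :: "(nat \<Rightarrow> nat) \<Rightarrow> nat \<Rightarrow> real" where
  "ap p = (\<lambda>i. if i \<in> {1..d} then a i (p i) else 0)"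

abbreviation "Tset \<equiv> PiE {1..d} (\<lambda>i. {1..l i})"

definition supp :: "(nat \<Rightarrow> nat) \<Rightarrow> ((nat \<Rightarrow> nat) \<Rightarrow> real) \<Rightarrow> bool" where
  "supp t w \<longleftrightarrow> (\<forall>p\<in>E. w p \<noteq> 0 \<longrightarrow> (\<forall>i\<in>{1..d}. \<tau> i (t i - 1) \<le> p i \<and> p i \<le> \<tau> i (t i)))"

definition graphH :: "(nat \<Rightarrow> nat) \<Rightarrow> ((nat \<Rightarrow> real) \<times> (nat \<Rightarrow> real)) set" where
  "graphH t = {(f, theta_map \<kappa> \<I> c f) | f. f \<in> box d a \<tau> t}"

lemma thp_ap: "p \<in> E \<Longrightarrow> theta_map \<kappa> \<I> c (ap p) = thp p"
proof
  fix k assume p: "p \<in> E"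
  show "theta_map \<kappa> \<I> c (ap p) k = thp p k"
  proof (cases "k \<in> {1..\<kappa>}")
    case False then show ?thesis by (simp only: theta_map_def thp_def if_not_P[OF False] if_False)
  next
    case True
    then have Ik: "\<I> k \<subseteq> Pow {1..d}" using Isub by auto
    have "(\<Prod>i\<in>I. ap p i) = (\<Prod>i\<in>I. a i (p i))" if "I \<in> \<I> k" for I
    proof -
      have "I \<subseteq> {1..d}" using that Ik by auto
      then show ?thesis unfolding ap_def by (intro prod.cong refl) auto
    qed
    then show ?thesis unfolding theta_map_def thp_def using True by simp
  qed
qed

lemma Svn: "(\<lambda>i. Sv w i n) = (\<Sum>p\<in>E. w p *\<^sub>R ap p)"
proof
  fix i
  have "Sv w i n = (\<Sum>p\<in>E. w p * ap p i)"
    unfolding Sv_def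
  proof (intro sum.cong refl)
    fix p assume p: "p \<in> E"
    show "w p * svp p i n = w p * ap p i"
      using E_le[OF p] unfolding svp_def ap_def by (cases "i \<in> {1..d}") auto
  qed
  then show "Sv w i n = (\<Sum>p\<in>E. w p *\<^sub>R ap p) i" by (simp add: sum_fun_apply scaleR_fun_apply)
qed

lemma Th_sum: "Th w = (\<Sum>p\<in>E. w p *\<^sub>R thp p)"
  by (rule ext) (simp add: Th_def sum_fun_apply scaleR_fun_apply)

lemma ap_box:
  assumes t: "t \<in> Tset" and p: "p \<in> E" and b: "\<forall>i\<in>{1..d}. \<tau> i (t i - 1) \<le> p i \<and> p i \<le> \<tau> i (t i)"
  shows "ap p \<in> box d a \<tau> t"
  unfolding box_def
proof (intro CollectI conjI ballI allI impI)
  fix i assume i: "i \<in> {1..d}"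
  have tl: "t i \<le> l i" using t i by (auto simp: PiE_def Pi_def)
  have n: "\<tau> i (t i) \<le> n" by (rule tau_n[OF i tl])
  have pi: "\<tau> i (t i - 1) \<le> p i" "p i \<le> \<tau> i (t i)" using b i by auto
  show "a i (\<tau> i (t i - 1)) \<le> ap p i" using a_le[OF i pi(1) E_le[OF p i]] i unfolding ap_def by auto
  show "ap p i \<le> a i (\<tau> i (t i))" using a_le[OF i pi(2) n] i unfolding ap_def by auto
next
  fix i assume "i \<notin> {1..d}" then show "ap p i = 0" unfolding ap_def by auto
qed

lemma supp_hull:
  assumes t: "t \<in> Tset" and dw: "distw w" and sp: "supp t w"
  shows "((\<lambda>i. Sv w i n), Th w) \<in> convex hull graphH t"
proof -
  define A where "A = {p\<in>E. w p \<noteq> 0}"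
  have AE: "A \<subseteq> E" unfolding A_def by auto
  have "((\<lambda>i. Sv w i n), Th w) = (\<Sum>p\<in>E. w p *\<^sub>R (ap p, thp p))"
    unfolding Svn Th_sum by (simp only: scaleR_Pair sum_Pair)
  also have "\<dots> = (\<Sum>p\<in>A. w p *\<^sub>R (ap p, thp p))"
    by (rule sum.mono_neutral_right[OF finE AE]) (auto simp: A_def zero_prod_def)
  finally have eq: "((\<lambda>i. Sv w i n), Th w) = (\<Sum>p\<in>A. w p *\<^sub>R (ap p, thp p))" .
  have s1: "sum w A = 1"
  proof -
    have "sum w E = sum w A" by (rule sum.mono_neutral_right[OF finE AE]) (auto simp: A_def)
    then show ?thesis using dw unfolding distw_def by simp
  qed
  show ?thesis unfolding eq
  proof (rule convex_sum)
    show "finite A" using finite_subset[OF AE finE] .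
    show "convex (convex hull graphH t)" by simp
    show "sum w A = 1" by (rule s1)
    show "\<And>i. i \<in> A \<Longrightarrow> 0 \<le> w i" using dw AE unfolding distw_def by auto
    fix p assume pA: "p \<in> A"
    then have p: "p \<in> E" "w p \<noteq> 0" unfolding A_def by auto
    have "ap p \<in> box d a \<tau> t" using ap_box[OF t p(1)] sp p unfolding supp_def by auto
    then have "(ap p, thp p) \<in> graphH t" unfolding graphH_def using thp_ap[OF p(1)] by force
    then show "(ap p, thp p) \<in> convex hull graphH t" by (rule hull_inc)
  qed
qed

lemma sum_supp_const:
  fixes w g :: "(nat \<Rightarrow> nat) \<Rightarrow> real" and cc :: real
  assumes "\<forall>p\<in>E. w p \<noteq> 0 \<longrightarrow> g p = cc"
  shows "(\<Sum>p\<in>E. w p * g p) = cc * (\<Sum>p\<in>E. w p)"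
proof -
  have "(\<Sum>p\<in>E. w p * g p) = (\<Sum>p\<in>E. cc * w p)"
  proof (intro sum.cong refl)
    fix x assume "x \<in> E" then show "w x * g x = cc * w x" using assms by (cases "w x = 0") (auto simp: mult.commute)
  qed
  then show ?thesis by (simp add: sum_distrib_left)
qed

lemma FT_supp:
  assumes x: "(\<theta>, w, s, \<delta>) \<in> FT"
  shows "\<exists>t\<in>Tset. supp t w"
proof -
  have h: "distw w" "incok True w \<delta>" using x form_iff by auto
  have w0: "\<forall>p\<in>E. 0 \<le> w p" and s1: "sum w E = 1" using h(1) unfolding distw_def by auto
  define t where "t = (\<lambda>i\<in>{1..d}. LEAST t. t \<in> {1..l i} \<and> (t = l i \<or> \<delta> i t = 0))"
  have tP: "t i \<in> {1..l i} \<and> (t i = l i \<or> \<delta> i (t i) = 0)" if i: "i \<in> {1..d}" for i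
  proof -
    define P where "P = (\<lambda>t. t \<in> {1..l i} \<and> (t = l i \<or> \<delta> i t = 0))"
    have "P (l i)" using l_pos[OF i] unfolding P_def by auto
    then have "P (LEAST t. P t)" by (rule LeastI)
    moreover have "t i = (LEAST t. P t)" unfolding t_def P_def using i by simp
    ultimately show ?thesis unfolding P_def by simp
  qed
  have tmin: "\<not> (t' \<in> {1..l i} \<and> (t' = l i \<or> \<delta> i t' = 0))" if i: "i \<in> {1..d}" and lt: "t' < t i" for i t'
    using not_less_Least[of t' "\<lambda>t. t \<in> {1..l i} \<and> (t = l i \<or> \<delta> i t = 0)"] lt i unfolding t_def by simp
  have tT: "t \<in> Tset" using tP unfolding t_def by (auto simp: PiE_def Pi_def extensional_def)
  have "supp t w" unfolding supp_def
  proof (intro ballI impI)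
    fix p i assume p: "p \<in> E" and wp: "w p \<noteq> 0" and i: "i \<in> {1..d}"
    have up: "p i \<le> \<tau> i (t i)"
    proof (cases "t i = l i")
      case True then show ?thesis using E_le[OF p i] tau_l[OF i] by simp
    next
      case False
      then have d0: "\<delta> i (t i) = 0" and tin: "t i \<in> {1..l i - 1}" using tP[OF i] by auto
      have "Pge w i (\<tau> i (t i) + 1) \<le> 0" using h(2) i tin d0 unfolding incok_def by force
      then have "(if \<tau> i (t i) + 1 \<le> p i then 1 else 0 :: real) = 0"
        using sum_nonneg_zero_each[OF finE w0, of "\<lambda>p. if \<tau> i (t i) + 1 \<le> p i then 1 else 0" p] p wp
        unfolding Pge_def by auto
      then show ?thesis by (auto split: if_splits)
    qed
    have lo: "\<tau> i (t i - 1) \<le> p i"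
    proof (cases "t i = 1")
      case True then show ?thesis using tau_0[OF i] by simp
    next
      case False
      then have tin: "t i - 1 \<in> {1..l i - 1}" and lt: "t i - 1 < t i" using tP[OF i] by auto
      then have "\<delta> i (t i - 1) \<noteq> 0" using tmin[OF i lt] by auto
      then have "\<delta> i (t i - 1) = 1" and bd: "Pge w i (\<tau> i (t i - 1)) \<ge> \<delta> i (t i - 1)"
        using h(2) i tin unfolding incok_def by force+
      then have "Pge w i (\<tau> i (t i - 1)) \<ge> 1" by simp
      moreover have "(\<Sum>p\<in>E. w p * (if \<tau> i (t i - 1) \<le> p i then 0 else 1)) = sum w E - Pge w i (\<tau> i (t i - 1))"
      proof -
        have "(\<Sum>p\<in>E. w p * (if \<tau> i (t i - 1) \<le> p i then 0 else 1))
            = (\<Sum>p\<in>E. w p - w p * (if \<tau> i (t i - 1) \<le> p i then 1 else 0))"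
          by (intro sum.cong refl) auto
        then show ?thesis unfolding Pge_def by (simp add: sum_subtractf)
      qed
      ultimately have "(\<Sum>p\<in>E. w p * (if \<tau> i (t i - 1) \<le> p i then 0 else 1)) \<le> 0"
        using s1 by simp
      then have "(if \<tau> i (t i - 1) \<le> p i then 0 else 1 :: real) = 0"
        using sum_nonneg_zero_each[OF finE w0, of "\<lambda>p. if \<tau> i (t i - 1) \<le> p i then 0 else 1" p] p wp
        by auto
      then show ?thesis by (auto split: if_splits)
    qed
    show "\<tau> i (t i - 1) \<le> p i \<and> p i \<le> \<tau> i (t i)" using up lo by simp
  qed
  then show ?thesis using tT by blast
qed

definition dt :: "(nat \<Rightarrow> nat) \<Rightarrow> nat \<Rightarrow> nat \<Rightarrow> real" where
  "dt t = (\<lambda>i t'. if (i, t') \<in> Dom then (if t' < t i then 1 else 0) else 0)"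

lemma box_FT:
  assumes t: "t \<in> Tset" and dw: "distw w" and sp: "supp t w"
  shows "(Th w, w, Sv w, dt t) \<in> FT"
proof -
  have s1: "sum w E = 1" using dw unfolding distw_def by auto
  have A: "\<forall>i t'. (i, t') \<notin> Dom \<longrightarrow> dt t i t' = 0" unfolding dt_def by auto
  have B: "\<forall>i\<in>{1..d}. \<forall>t'\<in>{1..l i - 1}. (if True then dt t i t' \<in> {0, 1} else dt t i t' \<in> {0..1})
        \<and> Pge w i (\<tau> i t') \<ge> dt t i t' \<and> dt t i t' \<ge> Pge w i (\<tau> i t' + 1)"
  proof (intro ballI)
    fix i t' assume i: "i \<in> {1..d}" and t': "t' \<in> {1..l i - 1}"
    then have D: "(i, t') \<in> Dom" unfolding Dom_def by auto
    have ti: "t i \<in> {1..l i}" using t i by auto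
    show "(if True then dt t i t' \<in> {0, 1} else dt t i t' \<in> {0..1})
        \<and> Pge w i (\<tau> i t') \<ge> dt t i t' \<and> dt t i t' \<ge> Pge w i (\<tau> i t' + 1)"
    proof (cases "t' < t i")
      case True
      then have dv: "dt t i t' = 1" unfolding dt_def using D by simp
      have "\<tau> i t' \<le> \<tau> i (t i - 1)" using tau_le[OF i, of t' "t i - 1"] True ti by auto
      then have "\<forall>p\<in>E. w p \<noteq> 0 \<longrightarrow> (if \<tau> i t' \<le> p i then 1 else 0 :: real) = 1"
        using sp i unfolding supp_def by fastforce
      then have "Pge w i (\<tau> i t') = 1" unfolding Pge_def
        using sum_supp_const[of w "\<lambda>p. if \<tau> i t' \<le> p i then 1 else 0" 1] s1 by simp
      then show ?thesis using dv Pge_bounds[OF dw] by simp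
    next
      case False
      then have dv: "dt t i t' = 0" unfolding dt_def using D by simp
      have "\<tau> i (t i) \<le> \<tau> i t'" using tau_le[OF i, of "t i" t'] False t' by auto
      then have "\<forall>p\<in>E. w p \<noteq> 0 \<longrightarrow> (if \<tau> i t' + 1 \<le> p i then 1 else 0 :: real) = 0"
        using sp i unfolding supp_def by fastforce
      then have "Pge w i (\<tau> i t' + 1) = 0" unfolding Pge_def
        using sum_supp_const[of w "\<lambda>p. if \<tau> i t' + 1 \<le> p i then 1 else 0" 0] s1 by simp
      then show ?thesis using dv Pge_bounds[OF dw] by simp
    qed
  qed
  have "incok True w (dt t)" unfolding incok_def using A B by blast
  then show ?thesis using form_iff dw by auto
qed


lemma graph_Q:
  assumes t: "t \<in> Tset" and f: "f \<in> box d a \<tau> t"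
  shows "\<exists>w. distw w \<and> supp t w \<and> (\<lambda>i. Sv w i n) = f \<and> Th w = theta_map \<kappa> \<I> c f"
proof -
  define lo where "lo i = \<tau> i (t i - 1)" for i
  define hi where "hi i = \<tau> i (t i)" for i
  define lam where "lam i = (f i - a i (lo i)) / (a i (hi i) - a i (lo i))" for i
  have fb: "a i (lo i) \<le> f i \<and> f i \<le> a i (hi i)" if "i \<in> {1..d}" for i
    using f that unfolding box_def lo_def hi_def by auto
  have f0: "f i = 0" if "i \<notin> {1..d}" for i using f that unfolding box_def by auto
  have lhi: "lo i < hi i \<and> hi i \<le> n" if i: "i \<in> {1..d}" for i
  proof -
    have ti: "t i \<in> {1..l i}" using t i by auto
    show ?thesis unfolding lo_def hi_def using tau_less[OF i, of "t i - 1" "t i"] tau_n[OF i, of "t i"] ti by auto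
  qed
  have alh: "a i (lo i) < a i (hi i)" if i: "i \<in> {1..d}" for i using a_less[OF i] lhi[OF i] by auto
  have lh: "\<forall>i\<in>{1..d}. lo i < hi i \<and> hi i \<le> n \<and> 0 \<le> lam i \<and> lam i \<le> 1"
  proof
    fix i assume i: "i \<in> {1..d}"
    have "0 \<le> lam i" "lam i \<le> 1" unfolding lam_def using fb[OF i] alh[OF i] by (auto simp: divide_simps)
    then show "lo i < hi i \<and> hi i \<le> n \<and> 0 \<le> lam i \<and> lam i \<le> 1" using lhi[OF i] by auto
  qed
  define w where "w = pw lo hi lam"
  have Fvf: "Fv lo hi lam = f"
  proof
    fix i show "Fv lo hi lam i = f i"
    proof (cases "i \<in> {1..d}")
      case True
      have "(1 - lam i) * a i (lo i) + lam i * a i (hi i) = a i (lo i) + lam i * (a i (hi i) - a i (lo i))"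
        by (simp add: algebra_simps)
      also have "\<dots> = f i" unfolding lam_def using alh[OF True] by simp
      finally show ?thesis unfolding Fv_def using True by simp
    next
      case False then show ?thesis unfolding Fv_def using f0[OF False] by (simp only: if_not_P[OF False] if_False)
    qed
  qed
  have "distw w" unfolding w_def by (rule pw_dist[OF lh])
  moreover have "supp t w" unfolding supp_def
  proof (intro ballI impI)
    fix p i assume "p \<in> E" "w p \<noteq> 0" "i \<in> {1..d}"
    then have "p i = lo i \<or> p i = hi i" using pw_supp[OF lh] unfolding w_def by blast
    then show "\<tau> i (t i - 1) \<le> p i \<and> p i \<le> \<tau> i (t i)" using lhi[OF \<open>i \<in> {1..d}\<close>] unfolding lo_def hi_def by auto
  qed
  moreover have "(\<lambda>i. Sv w i n) = f"
  proof
    fix i show "Sv w i n = f i"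
    proof (cases "i \<in> {1..d}")
      case True
      have "Sv w i n = (1 - lam i) * a i (min n (lo i)) + lam i * a i (min n (hi i))"
        unfolding w_def by (rule pw_Sv[OF lh True order_refl])
      also have "\<dots> = Fv lo hi lam i"
      proof -
        have "min n (lo i) = lo i" "min n (hi i) = hi i" using lhi[OF True] by auto
        then show ?thesis using True unfolding Fv_def by simp
      qed
      finally show ?thesis using Fvf by simp
    next
      case False
      then have "svp p i n = 0" for p unfolding svp_def by auto
      then show ?thesis unfolding Sv_def using f0[OF False] by simp
    qed
  qed
  moreover have "Th w = theta_map \<kappa> \<I> c f" unfolding w_def pw_Th[OF lh] Fvf ..
  ultimately show ?thesis by blast
qed

lemma Q_convex: "convex {((\<lambda>i. Sv w i n), Th w) | w. distw w \<and> supp t w}"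
proof (rule convexI)
  fix x y and u v :: real
  assume x: "x \<in> {((\<lambda>i. Sv w i n), Th w) | w. distw w \<and> supp t w}"
    and y: "y \<in> {((\<lambda>i. Sv w i n), Th w) | w. distw w \<and> supp t w}" and uv: "0 \<le> u" "0 \<le> v" "u + v = 1"
  obtain w1 where w1: "x = ((\<lambda>i. Sv w1 i n), Th w1)" "distw w1" "supp t w1" using x by blast
  obtain w2 where w2: "y = ((\<lambda>i. Sv w2 i n), Th w2)" "distw w2" "supp t w2" using y by blast
  define w where "w = (\<lambda>p. u * w1 p + v * w2 p)"
  have dw: "distw w" using w1(2) w2(2) uv unfolding distw_def w_def
    by (auto simp: sum.distrib sum_distrib_left[symmetric])
  have sw: "supp t w" using w1(3) w2(3) unfolding supp_def w_def by force
  have "u *\<^sub>R x + v *\<^sub>R y = ((\<lambda>i. Sv w i n), Th w)"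
    unfolding w1 w2 w_def by (auto simp: fun_eq_iff lin_Sv lin_Th scaleR_fun_def)
  then show "u *\<^sub>R x + v *\<^sub>R y \<in> {((\<lambda>i. Sv w i n), Th w) | w. distw w \<and> supp t w}"
    using dw sw by blast
qed

lemma proj_eq: "(\<lambda>(\<theta>, w, s, \<delta>). (\<lambda>i. s i n, \<theta>)) ` FT = target_set d \<kappa> \<I> c a \<tau> l"
proof
  show "(\<lambda>(\<theta>, w, s, \<delta>). (\<lambda>i. s i n, \<theta>)) ` FT \<subseteq> target_set d \<kappa> \<I> c a \<tau> l"
  proof
    fix y assume "y \<in> (\<lambda>(\<theta>, w, s, \<delta>). (\<lambda>i. s i n, \<theta>)) ` FT"
    then obtain \<theta> w s \<delta> where x: "(\<theta>, w, s, \<delta>) \<in> FT" and y: "y = (\<lambda>i. s i n, \<theta>)" by auto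
    have h: "distw w" "\<theta> = Th w" "s = Sv w" using x form_iff by auto
    obtain t where t: "t \<in> Tset" "supp t w" using FT_supp[OF x] by blast
    have "y \<in> convex hull graphH t" using supp_hull[OF t(1) h(1) t(2)] y h by simp
    moreover have "box d a \<tau> t \<in> Hboxes d a \<tau> l" unfolding Hboxes_def using t by blast
    ultimately show "y \<in> target_set d \<kappa> \<I> c a \<tau> l" unfolding target_set_def graphH_def by blast
  qed
next
  show "target_set d \<kappa> \<I> c a \<tau> l \<subseteq> (\<lambda>(\<theta>, w, s, \<delta>). (\<lambda>i. s i n, \<theta>)) ` FT"
  proof
    fix y assume "y \<in> target_set d \<kappa> \<I> c a \<tau> l"
    then obtain t where t: "t \<in> Tset" and y: "y \<in> convex hull graphH t"
      unfolding target_set_def Hboxes_def graphH_def by blast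
    have "graphH t \<subseteq> {((\<lambda>i. Sv w i n), Th w) | w. distw w \<and> supp t w}"
    proof
      fix z assume "z \<in> graphH t"
      then obtain f where z: "z = (f, theta_map \<kappa> \<I> c f)" "f \<in> box d a \<tau> t" unfolding graphH_def by blast
      obtain w where "distw w" "supp t w" "(\<lambda>i. Sv w i n) = f" "Th w = theta_map \<kappa> \<I> c f"
        using graph_Q[OF t z(2)] by blast
      then show "z \<in> {((\<lambda>i. Sv w i n), Th w) | w. distw w \<and> supp t w}" using z by auto
    qed
    then have "convex hull graphH t \<subseteq> {((\<lambda>i. Sv w i n), Th w) | w. distw w \<and> supp t w}"
      using Q_convex by (rule hull_minimal)
    then obtain w where w: "y = ((\<lambda>i. Sv w i n), Th w)" "distw w" "supp t w" using y by blast
    have "(Th w, w, Sv w, dt t) \<in> FT" by (rule box_FT[OF t w(2) w(3)])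
    then show "y \<in> (\<lambda>(\<theta>, w, s, \<delta>). (\<lambda>i. s i n, \<theta>)) ` FT" using w(1) by force
  qed
qed

lemma ideal: "ideal_formulation d n \<kappa> \<I> c a \<tau> l"
  unfolding ideal_formulation_def using proj_eq extreme_binary by blast

end


context cor begin

lemma micp:
  fixes X :: "'x::euclidean_space set" and f :: "'x \<Rightarrow> nat \<Rightarrow> real"
    and u :: "'x \<Rightarrow> nat \<Rightarrow> nat \<Rightarrow> real" and W :: "('x \<times> (nat \<Rightarrow> real)) set"
  assumes fb: "\<forall>x\<in>X. \<forall>i\<in>{1..d}. a i 0 \<le> f x i \<and> f x i \<le> a i n"
    and uconv: "\<forall>i\<in>{1..d}. \<forall>j\<in>{0..n}. convex_on X (\<lambda>x. u x i j)"
    and ub: "\<forall>x\<in>X. \<forall>i\<in>{1..d}. u x i 0 = a i 0 \<and> u x i n = f x i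
           \<and> (\<forall>j\<in>{1..n-1}. u x i j \<le> min (f x i) (a i j))"
    and W: "convex W"
    and gW: "{(x, (\<lambda>i. if i \<in> {1..d} then f x i else 0)) | x. x \<in> X} \<subseteq> W"
  shows "MICP_relaxation_graph d n \<kappa> \<I> c a \<tau> l X u W f"
proof -
  have part1: "(x, theta_map \<kappa> \<I> c (f x)) \<in> (\<lambda>(x, \<theta>, w, s, \<delta>). (x, \<theta>)) ` ext_formulation True d n \<kappa> \<I> c a \<tau> l X u W"
    if x: "x \<in> X" for x
  proof -
    define P where "P i j = (f x i \<le> a i (j + 1))" for i j
    define j0 where "j0 i = (LEAST j. P i j)" for i
    have j0P: "P i (j0 i)" and j0n: "j0 i \<le> n - 1" if i: "i \<in> {1..d}" for i
    proof -
      have "P i (n - 1)" unfolding P_def using fb x i n1 by auto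
      then show "P i (j0 i)" "j0 i \<le> n - 1" unfolding j0_def by (auto intro: LeastI Least_le)
    qed
    have j0lo: "a i (j0 i) \<le> f x i" if i: "i \<in> {1..d}" for i
    proof (cases "j0 i = 0")
      case True then show ?thesis using fb x i by auto
    next
      case False
      then have "\<not> P i (j0 i - 1)" unfolding j0_def using not_less_Least[of "j0 i - 1" "P i"]
        by (metis j0_def diff_less less_one not_gr_zero)
      then show ?thesis unfolding P_def using False by auto
    qed
    define lo where "lo i = j0 i" for i
    define hi where "hi i = j0 i + 1" for i
    define lam where "lam i = (f x i - a i (lo i)) / (a i (hi i) - a i (lo i))" for i
    have lhi: "lo i < hi i \<and> hi i \<le> n" if i: "i \<in> {1..d}" for i
      using j0n[OF i] n1 unfolding lo_def hi_def by auto
    have alh: "a i (lo i) < a i (hi i)" if i: "i \<in> {1..d}" for i using a_less[OF i] lhi[OF i] by auto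
    have fb2: "a i (lo i) \<le> f x i \<and> f x i \<le> a i (hi i)" if i: "i \<in> {1..d}" for i
      using j0lo[OF i] j0P[OF i] unfolding P_def lo_def hi_def by auto
    have lh: "\<forall>i\<in>{1..d}. lo i < hi i \<and> hi i \<le> n \<and> 0 \<le> lam i \<and> lam i \<le> 1"
    proof
      fix i assume i: "i \<in> {1..d}"
      have "0 \<le> lam i" "lam i \<le> 1" unfolding lam_def using fb2[OF i] alh[OF i] by (auto simp: divide_simps)
      then show "lo i < hi i \<and> hi i \<le> n \<and> 0 \<le> lam i \<and> lam i \<le> 1" using lhi[OF i] by auto
    qed
    have comb: "(1 - lam i) * a i (lo i) + lam i * a i (hi i) = f x i" if i: "i \<in> {1..d}" for i
    proof -
      have "(1 - lam i) * a i (lo i) + lam i * a i (hi i) = a i (lo i) + lam i * (a i (hi i) - a i (lo i))"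
        by (simp add: algebra_simps)
      also have "\<dots> = f x i" unfolding lam_def using alh[OF i] by simp
      finally show ?thesis .
    qed
    define fx where "fx = (\<lambda>i. if i \<in> {1..d} then f x i else 0)"
    have Fvf: "Fv lo hi lam = fx"
      unfolding Fv_def fx_def using comb by auto
    define w where "w = pw lo hi lam"
    have dw: "distw w" unfolding w_def by (rule pw_dist[OF lh])
    define t where "t = (\<lambda>i\<in>{1..d}. LEAST t. j0 i + 1 \<le> \<tau> i t)"
    have tprops: "t i \<in> {1..l i} \<and> \<tau> i (t i - 1) \<le> j0 i \<and> j0 i + 1 \<le> \<tau> i (t i)" if i: "i \<in> {1..d}" for i
    proof -
      define Q where "Q t = (j0 i + 1 \<le> \<tau> i t)" for t
      have ti: "t i = (LEAST t. Q t)" unfolding t_def Q_def using i by simp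
      have "Q (l i)" unfolding Q_def using tau_l[OF i] j0n[OF i] n1 by auto
      then have q: "Q (t i)" and le: "t i \<le> l i" unfolding ti by (auto intro: LeastI Least_le)
      have t0: "t i \<noteq> 0" using q tau_0[OF i] unfolding Q_def by (metis add_eq_0_iff_both_eq_0 le_zero_eq one_neq_zero)
      have "\<not> Q (t i - 1)" unfolding ti using not_less_Least[of "t i - 1" Q] t0 ti by simp
      then show ?thesis using q le t0 unfolding Q_def by auto
    qed
    have tT: "t \<in> Tset" using tprops unfolding t_def by (auto simp: PiE_def Pi_def extensional_def)
    have sp: "supp t w" unfolding supp_def
    proof (intro ballI impI)
      fix p i assume "p \<in> E" "w p \<noteq> 0" and i: "i \<in> {1..d}"
      then have "p i = lo i \<or> p i = hi i" using pw_supp[OF lh] unfolding w_def by blast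
      then show "\<tau> i (t i - 1) \<le> p i \<and> p i \<le> \<tau> i (t i)" using tprops[OF i] unfolding lo_def hi_def by auto
    qed
    have FT: "(Th w, w, Sv w, dt t) \<in> FT" by (rule box_FT[OF tT dw sp])
    have Sv_val: "Sv w i j = (if j \<le> j0 i then a i j else f x i)" if i: "i \<in> {1..d}" and j: "j \<le> n" for i j
    proof -
      have "Sv w i j = (1 - lam i) * a i (min j (lo i)) + lam i * a i (min j (hi i))"
        unfolding w_def by (rule pw_Sv[OF lh i j])
      also have "\<dots> = (if j \<le> j0 i then a i j else f x i)"
      proof (cases "j \<le> j0 i")
        case True
        then have "min j (lo i) = j" "min j (hi i) = j" unfolding lo_def hi_def by auto
        then show ?thesis using True by (simp add: algebra_simps)
      next
        case False
        then have "min j (lo i) = lo i" "min j (hi i) = hi i" unfolding lo_def hi_def by auto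
        then show ?thesis using False comb[OF i] by simp
      qed
      finally show ?thesis .
    qed
    have uok: "\<forall>i\<in>{1..d}. \<forall>j\<in>{0..n}. u x i j \<le> Sv w i j"
    proof (intro ballI)
      fix i j assume i: "i \<in> {1..d}" and j: "j \<in> {0..n}"
      have ux: "u x i 0 = a i 0" "u x i n = f x i" "\<forall>j\<in>{1..n-1}. u x i j \<le> min (f x i) (a i j)"
        using ub x i by auto
      show "u x i j \<le> Sv w i j"
      proof (cases "j \<le> j0 i")
        case True
        then have "j \<noteq> n" using j0n[OF i] n1 by auto
        then show ?thesis using Sv_val[OF i] j True ux by (cases "j = 0") auto
      next
        case False
        then show ?thesis using Sv_val[OF i] j ux by (cases "j = n") auto
      qed
    qed
    have Svn: "(\<lambda>i. Sv w i n) = fx"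
    proof
      fix i show "Sv w i n = fx i"
      proof (cases "i \<in> {1..d}")
        case True then show ?thesis using Sv_val[OF True, of n] j0n[OF True] n1 unfolding fx_def by auto
      next
        case False
        then have "svp p i n = 0" for p unfolding svp_def by auto
        moreover have "fx i = 0" unfolding fx_def by (simp only: if_not_P[OF False] if_False)
        ultimately show ?thesis unfolding Sv_def by simp
      qed
    qed
    have inW: "(x, (\<lambda>i. Sv w i n)) \<in> W" unfolding Svn fx_def using gW x by blast
    have ext: "(x, Th w, w, Sv w, dt t) \<in> ext_formulation True d n \<kappa> \<I> c a \<tau> l X u W"
      unfolding ext_formulation_def using FT x uok inW by auto
    have "Th w = theta_map \<kappa> \<I> c fx" unfolding w_def pw_Th[OF lh] Fvf ..
    also have "\<dots> = theta_map \<kappa> \<I> c (f x)"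
    proof
      fix k show "theta_map \<kappa> \<I> c fx k = theta_map \<kappa> \<I> c (f x) k"
      proof (cases "k \<in> {1..\<kappa>}")
        case False then show ?thesis by (simp only: theta_map_def if_not_P[OF False] if_False)
      next
        case True
        then have Ik: "\<I> k \<subseteq> Pow {1..d}" using Isub by auto
        have "(\<Prod>i\<in>I. fx i) = (\<Prod>i\<in>I. f x i)" if "I \<in> \<I> k" for I
        proof -
          have "I \<subseteq> {1..d}" using that Ik by auto
          then show ?thesis unfolding fx_def by (intro prod.cong refl) auto
        qed
        then show ?thesis unfolding theta_map_def using True by simp
      qed
    qed
    finally show ?thesis using ext by force
  qed
  have convX: "convex X"
  proof -
    have "convex_on X (\<lambda>x. u x 1 0)" using uconv d1 by auto
    then show ?thesis unfolding convex_on_def by simp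
  qed
  have part2: "convex (ext_formulation False d n \<kappa> \<I> c a \<tau> l X u W)"
  proof (rule convexI)
    fix z1 z2 and s t :: real
    assume z1: "z1 \<in> ext_formulation False d n \<kappa> \<I> c a \<tau> l X u W"
      and z2: "z2 \<in> ext_formulation False d n \<kappa> \<I> c a \<tau> l X u W"
      and st: "0 \<le> s" "0 \<le> t" "s + t = 1"
    obtain x1 \<theta>1 w1 s1 \<delta>1 where e1: "z1 = (x1, \<theta>1, w1, s1, \<delta>1)" by (cases z1) auto
    obtain x2 \<theta>2 w2 s2 \<delta>2 where e2: "z2 = (x2, \<theta>2, w2, s2, \<delta>2)" by (cases z2) auto
    have h1: "(\<theta>1, w1, s1, \<delta>1) \<in> FF" "x1 \<in> X" "\<forall>i\<in>{1..d}. \<forall>j\<in>{0..n}. u x1 i j \<le> s1 i j"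
      "(x1, (\<lambda>i. s1 i n)) \<in> W" using z1 e1 unfolding ext_formulation_def by auto
    have h2: "(\<theta>2, w2, s2, \<delta>2) \<in> FF" "x2 \<in> X" "\<forall>i\<in>{1..d}. \<forall>j\<in>{0..n}. u x2 i j \<le> s2 i j"
      "(x2, (\<lambda>i. s2 i n)) \<in> W" using z2 e2 unfolding ext_formulation_def by auto
    have F: "s *\<^sub>R (\<theta>1, w1, s1, \<delta>1) + t *\<^sub>R (\<theta>2, w2, s2, \<delta>2) \<in> FF"
      by (rule convexD[OF convex_FF h1(1) h2(1) st])
    have xX: "s *\<^sub>R x1 + t *\<^sub>R x2 \<in> X" by (rule convexD[OF convX h1(2) h2(2) st])
    have uu: "\<forall>i\<in>{1..d}. \<forall>j\<in>{0..n}. u (s *\<^sub>R x1 + t *\<^sub>R x2) i j \<le> (s *\<^sub>R s1 + t *\<^sub>R s2) i j"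
    proof (intro ballI)
      fix i j assume i: "i \<in> {1..d}" and j: "j \<in> {0..n}"
      have cv: "convex_on X (\<lambda>x. u x i j)" using uconv i j by auto
      have s_eq: "s = 1 - t" using st by simp
      have "u (s *\<^sub>R x1 + t *\<^sub>R x2) i j \<le> s * u x1 i j + t * u x2 i j"
        using convex_onD[OF cv, of t x1 x2] st h1(2) h2(2) unfolding s_eq by auto
      also have "\<dots> \<le> s * s1 i j + t * s2 i j"
        using h1(3) h2(3) i j st by (intro add_mono mult_left_mono) auto
      finally show "u (s *\<^sub>R x1 + t *\<^sub>R x2) i j \<le> (s *\<^sub>R s1 + t *\<^sub>R s2) i j"
        by (simp add: scaleR_fun_def)
    qed
    have "s *\<^sub>R (x1, (\<lambda>i. s1 i n)) + t *\<^sub>R (x2, (\<lambda>i. s2 i n)) \<in> W"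
      by (rule convexD[OF W h1(4) h2(4) st])
    moreover have "s *\<^sub>R (x1, (\<lambda>i. s1 i n)) + t *\<^sub>R (x2, (\<lambda>i. s2 i n))
        = (s *\<^sub>R x1 + t *\<^sub>R x2, (\<lambda>i. (s *\<^sub>R s1 + t *\<^sub>R s2) i n))"
      by (simp add: scaleR_fun_def fun_eq_iff)
    ultimately have WW: "(s *\<^sub>R x1 + t *\<^sub>R x2, (\<lambda>i. (s *\<^sub>R s1 + t *\<^sub>R s2) i n)) \<in> W" by simp
    have "s *\<^sub>R z1 + t *\<^sub>R z2 = (s *\<^sub>R x1 + t *\<^sub>R x2, s *\<^sub>R \<theta>1 + t *\<^sub>R \<theta>2, s *\<^sub>R w1 + t *\<^sub>R w2,
        s *\<^sub>R s1 + t *\<^sub>R s2, s *\<^sub>R \<delta>1 + t *\<^sub>R \<delta>2)" unfolding e1 e2 by simp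
    moreover have "(s *\<^sub>R \<theta>1 + t *\<^sub>R \<theta>2, s *\<^sub>R w1 + t *\<^sub>R w2, s *\<^sub>R s1 + t *\<^sub>R s2, s *\<^sub>R \<delta>1 + t *\<^sub>R \<delta>2) \<in> FF"
      using F by simp
    ultimately show "s *\<^sub>R z1 + t *\<^sub>R z2 \<in> ext_formulation False d n \<kappa> \<I> c a \<tau> l X u W"
      unfolding ext_formulation_def using xX uu WW by auto
  qed
  show ?thesis unfolding MICP_relaxation_graph_def using part1 part2 by blast
qed

end

theorem corollary7p4:
  fixes d n \<kappa> :: nat
    and \<I> :: "nat \<Rightarrow> nat set set" and c :: "nat \<Rightarrow> nat set \<Rightarrow> real"
    and a :: "nat \<Rightarrow> nat \<Rightarrow> real"
    and \<tau> :: "nat \<Rightarrow> nat \<Rightarrow> nat" and l :: "nat \<Rightarrow> nat"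
    and X :: "'x::euclidean_space set"
    and f :: "'x \<Rightarrow> nat \<Rightarrow> real"
    and u :: "'x \<Rightarrow> nat \<Rightarrow> nat \<Rightarrow> real"
    and W :: "('x \<times> (nat \<Rightarrow> real)) set"
  assumes "d \<ge> 1" and "n \<ge> 1" and "\<kappa> \<ge> 1"
    and "\<forall>k\<in>{1..\<kappa>}. \<I> k \<subseteq> Pow {1..d}"
    and "\<forall>i\<in>{1..d}. strict_mono_on {0..n} (a i)"
    and "\<forall>i\<in>{1..d}. \<tau> i 0 = 0 \<and> \<tau> i (l i) = n \<and> strict_mono_on {0..l i} (\<tau> i)"
    and "\<forall>x\<in>X. \<forall>i\<in>{1..d}. a i 0 \<le> f x i \<and> f x i \<le> a i n"
    and "\<forall>i\<in>{1..d}. \<forall>j\<in>{0..n}. convex_on X (\<lambda>x. u x i j)"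
    and "\<forall>x\<in>X. \<forall>i\<in>{1..d}. u x i 0 = a i 0 \<and> u x i n = f x i
           \<and> (\<forall>j\<in>{1..n-1}. u x i j \<le> min (f x i) (a i j))"
    and "convex W"
    and "{(x, (\<lambda>i. if i \<in> {1..d} then f x i else 0)) | x. x \<in> X} \<subseteq> W"
  shows "ideal_formulation d n \<kappa> \<I> c a \<tau> l
         \<and> MICP_relaxation_graph d n \<kappa> \<I> c a \<tau> l X u W f"
proof -
  interpret cor d n \<kappa> \<I> c a \<tau> l
    using assms(1,2,4,5,6) by unfold_locales auto
  show ?thesis using ideal micp[OF assms(7-11)] by blast
qed

end
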